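(* Assume that the super Poincaré inequality $$\mu(f^2)\le r\,\mathcal E(f)+\beta(r)\,\mu(|f|)^2,\qquad r>0,\ f\in\mathcal D(\mathcal E),$$ holds for some decreasing function $\beta:(0,\infty)\to(0,\infty)$. Suppose there exists a constant $\kappa_1>0$ such that $\kappa_2:=\mu(e^{-2V})<\infty$ and $$|V(x)-V(y)|\le\kappa_1\big(1\wedge d(x,y)\big)\quad\text{for all }(x,y)\text{ with }q(x,y)>0.$$ Then $$\mu_V(f^2)\le s\,\mathcal E_V(f)+\beta_V(s)\,\mu_V(|f|)^2,\qquad s>0,\ f\in\mathcal D(\mathcal E_V),$$ holds with $$\beta_V(s):=\inf\Big\{16\kappa_2\beta(r)^3(4+\lambda\kappa_1^2s'):\ s'\in(0,s],\ 0<r\le\frac{s'e^{-\kappa_1}}{4+\lambda\kappa_1^2s'}\Big\},\qquad s>0.$$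
   Context: Setting: $(E,d)$ is a Polish space with Borel $\sigma$-field and a probability measure $\mu$. Let $q:E\times E\to[0,\infty)$ be measurable with $q(x,x)=0$ for all $x$, and $\lambda:=\sup_{x\in E}\int_E(1\wedge d(x,y)^2)q(x,y)\,\mu(\mathrm dy)<\infty.$ For bounded measurable $f,g$ set $\Gamma(f,g)(x)=\int_E(f(x)-f(y))(g(x)-g(y))q(x,y)\mu(\mathrm dy)$; $\mathcal A$ is the set of bounded measurable $f$ with $\Gamma(f,f)$ bounded, assumed dense in $L^2(\mu)$. $(\mathcal E,\mathcal D(\mathcal E))$ is the closure in $L^2(\mu)$ of $\mathcal E(f,g)=\mu(\Gamma(f,g))$ on $\mathcal A$, $\mathcal E(f)=\mathcal E(f,f)$. Fix $o\in E$, $\rho(x)=d(o,x)$. $V$ is a measurable function bounded on each set $\{\rho\le r\}$, $r>0$, with $\mu(e^V)=1$; $\mu_V(\mathrm dx)=e^{V(x)}\mu(\mathrm dx)$, and $(\mathcal E_V,\mathcal D(\mathcal E_V))$ is the closure in $L^2(\mu_V)$ of $\mathcal E_V(f,g)=\mu_V(\Gamma(f,g))$ on $\mathcal A$, $\mathcal E_V(f)=\mathcal E_V(f,f)$. *)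

theory Defs
  imports "HOL-Probability.Probability"
begin

text \<open>The reference measure mu is fixed; the form is built on the class A
  (bounded measurable f with Gamma(f,f) bounded) and closed in L2(M),
  where M is either mu or mu_V.\<close>

definition jump_lambda :: "'a::metric_space measure \<Rightarrow> ('a \<Rightarrow> 'a \<Rightarrow> real) \<Rightarrow> real" where
  "jump_lambda \<mu> q =
     (SUP x. enn2real (\<integral>\<^sup>+ y. ennreal (min 1 ((dist x y)\<^sup>2) * q x y) \<partial>\<mu>))"

definition Gamma :: "'a measure \<Rightarrow> ('a \<Rightarrow> 'a \<Rightarrow> real) \<Rightarrow> ('a \<Rightarrow> real) \<Rightarrow> ('a \<Rightarrow> real) \<Rightarrow> 'a \<Rightarrow> real" where
  "Gamma \<mu> q f g x = (\<integral> y. (f x - f y) * (g x - g y) * q x y \<partial>\<mu>)"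

definition algA :: "'a measure \<Rightarrow> ('a \<Rightarrow> 'a \<Rightarrow> real) \<Rightarrow> ('a \<Rightarrow> real) set" where
  "algA \<mu> q = {f. f \<in> borel_measurable \<mu> \<and> (\<exists>C. \<forall>x. \<bar>f x\<bar> \<le> C) \<and>
      (\<exists>C::real. \<forall>x. (\<integral>\<^sup>+ y. ennreal ((f x - f y)\<^sup>2 * q x y) \<partial>\<mu>) \<le> ennreal C)}"

definition energy :: "'a measure \<Rightarrow> ('a \<Rightarrow> 'a \<Rightarrow> real) \<Rightarrow> 'a measure \<Rightarrow> ('a \<Rightarrow> real) \<Rightarrow> real" where
  "energy \<mu> q M f = (\<integral> x. Gamma \<mu> q f f x \<partial>M)"

definition approx_seq :: "'a measure \<Rightarrow> ('a \<Rightarrow> 'a \<Rightarrow> real) \<Rightarrow> 'a measure \<Rightarrow> (nat \<Rightarrow> 'a \<Rightarrow> real) \<Rightarrow> ('a \<Rightarrow> real) \<Rightarrow> bool" where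
  "approx_seq \<mu> q M fn f \<longleftrightarrow>
     (\<forall>n. fn n \<in> algA \<mu> q) \<and>
     ((\<lambda>n. \<integral> x. (fn n x - f x)\<^sup>2 \<partial>M) \<longlonglongrightarrow> 0) \<and>
     (\<forall>\<epsilon>>0. \<exists>N. \<forall>m\<ge>N. \<forall>n\<ge>N. energy \<mu> q M (\<lambda>x. fn n x - fn m x) < \<epsilon>)"

text \<open>Domain of the closure (as a set of representatives of L2(M) classes).\<close>
definition form_dom :: "'a measure \<Rightarrow> ('a \<Rightarrow> 'a \<Rightarrow> real) \<Rightarrow> 'a measure \<Rightarrow> ('a \<Rightarrow> real) set" where
  "form_dom \<mu> q M = {f. f \<in> borel_measurable M \<and> integrable M (\<lambda>x. (f x)\<^sup>2) \<and>
       (\<exists>fn. approx_seq \<mu> q M fn f)}"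

text \<open>Value of the closed form: the limit of energy along an approximating sequence
  (independent of the sequence since the form is closable).\<close>
definition form_val :: "'a measure \<Rightarrow> ('a \<Rightarrow> 'a \<Rightarrow> real) \<Rightarrow> 'a measure \<Rightarrow> ('a \<Rightarrow> real) \<Rightarrow> real" where
  "form_val \<mu> q M f = (SOME e. \<exists>fn. approx_seq \<mu> q M fn f \<and> ((\<lambda>n. energy \<mu> q M (fn n)) \<longlonglongrightarrow> e))"

end

theory Submission
  imports Defs
begin


locale JS =
  fixes \<mu> :: "'a::polish_space measure" and q :: "'a \<Rightarrow> 'a \<Rightarrow> real"
  assumes sets_mu: "sets \<mu> = sets borel" and prob: "prob_space \<mu>"
    and q_meas: "(\<lambda>(x, y). q x y) \<in> borel_measurable (borel \<Otimes>\<^sub>M borel)"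
    and q_nonneg: "\<And>x y. q x y \<ge> 0"
begin

lemma D_nonneg[simp]: "0 \<le> c\<^sup>2 * q x y"
  by (simp add: q_nonneg)

lemma meas_iff: "sets N = sets borel \<Longrightarrow> f \<in> borel_measurable N \<longleftrightarrow> f \<in> borel_measurable borel"
  by (metis measurable_cong_sets)

lemma q_meas_pair: assumes "sets N = sets borel" shows "(\<lambda>(x, y). q x y) \<in> borel_measurable (N \<Otimes>\<^sub>M \<mu>)"
  using q_meas measurable_cong_sets[OF sets_pair_measure_cong[OF assms sets_mu] refl] by metis

lemma D_meas:
  assumes N: "sets N = sets borel" and f: "f \<in> borel_measurable borel"
  shows "(\<lambda>(x, y). (f x - f y)\<^sup>2 * q x y) \<in> borel_measurable (N \<Otimes>\<^sub>M \<mu>)"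
proof -
  have [measurable]: "(\<lambda>(x, y). q x y) \<in> borel_measurable (N \<Otimes>\<^sub>M \<mu>)" using q_meas_pair[OF N] .
  have [measurable]: "f \<in> borel_measurable N" "f \<in> borel_measurable \<mu>" using f meas_iff N sets_mu by auto
  show ?thesis by measurable
qed

lemma algA_D:
  assumes "f \<in> algA \<mu> q"
  shows "f \<in> borel_measurable borel" "\<exists>C. \<forall>x. \<bar>f x\<bar> \<le> C"
    "\<exists>C::real. \<forall>x. (\<integral>\<^sup>+ y. ennreal ((f x - f y)\<^sup>2 * q x y) \<partial>\<mu>) \<le> ennreal C"
  using assms meas_iff[OF sets_mu] unfolding algA_def by auto

lemma D_int:
  assumes f: "f \<in> algA \<mu> q"
  shows "integrable \<mu> (\<lambda>y. (f x - f y)\<^sup>2 * q x y)"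
proof -
  have [measurable]: "f \<in> borel_measurable \<mu>" using algA_D(1)[OF f] meas_iff[OF sets_mu] by auto
  have [measurable]: "q x \<in> borel_measurable \<mu>"
    using measurable_Pair2[OF q_meas_pair[OF sets_mu], of x] sets_eq_imp_space_eq[OF sets_mu] by simp
  from algA_D(3)[OF f] obtain C where C: "\<And>x. (\<integral>\<^sup>+ y. ennreal ((f x - f y)\<^sup>2 * q x y) \<partial>\<mu>) \<le> ennreal C" by blast
  show ?thesis
    by (rule integrableI_nonneg) (auto intro!: q_nonneg le_less_trans[OF C])
qed

lemma Gamma_eq: "Gamma \<mu> q f f x = (\<integral> y. (f x - f y)\<^sup>2 * q x y \<partial>\<mu>)"
  unfolding Gamma_def by (simp add: power2_eq_square)

lemma Gamma_nn:
  assumes f: "f \<in> algA \<mu> q"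
  shows "ennreal (Gamma \<mu> q f f x) = (\<integral>\<^sup>+ y. ennreal ((f x - f y)\<^sup>2 * q x y) \<partial>\<mu>)"
  unfolding Gamma_eq using D_int[OF f, of x]
  by (subst nn_integral_eq_integral) (auto intro!: q_nonneg)

lemma Gamma_nonneg: "0 \<le> Gamma \<mu> q f f x"
  unfolding Gamma_eq by (auto intro!: integral_nonneg_AE q_nonneg)

lemma Gamma_bound:
  assumes f: "f \<in> algA \<mu> q"
  shows "\<exists>C. \<forall>x. Gamma \<mu> q f f x \<le> C"
proof -
  from algA_D(3)[OF f] obtain C where C: "\<And>x. (\<integral>\<^sup>+ y. ennreal ((f x - f y)\<^sup>2 * q x y) \<partial>\<mu>) \<le> ennreal C" by blast
  have "Gamma \<mu> q f f x \<le> max C 0" for x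
    using C[of x] Gamma_nn[OF f, of x] Gamma_nonneg[of f x]
    by (metis ennreal_le_iff2 max.cobounded1 max.cobounded2 order_trans ennreal_max_0 ennreal_le_iff)
  then show ?thesis by blast
qed

lemma Gamma_meas:
  assumes N: "sets N = sets borel" and f: "f \<in> borel_measurable borel"
  shows "Gamma \<mu> q f f \<in> borel_measurable N"
proof -
  interpret prob_space \<mu> by (rule prob)
  have e: "Gamma \<mu> q f f = (\<lambda>x. \<integral> y. (f x - f y)\<^sup>2 * q x y \<partial>\<mu>)" by (rule ext) (simp add: Gamma_eq)
  show ?thesis unfolding e
    by (rule borel_measurable_lebesgue_integral) (use D_meas[OF N f] in simp)
qed

lemma energy_int:
  assumes N: "sets N = sets borel" "finite_measure N" and f: "f \<in> algA \<mu> q"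
  shows "integrable N (Gamma \<mu> q f f)"
proof -
  interpret finite_measure N by (rule N(2))
  from Gamma_bound[OF f] obtain C where "\<And>x. Gamma \<mu> q f f x \<le> C" by blast
  then show ?thesis
    by (intro integrable_const_bound[where B=C]) (auto simp: Gamma_nonneg Gamma_meas[OF N(1) algA_D(1)[OF f]])
qed

lemma energy_nonneg: "0 \<le> energy \<mu> q N f"
  unfolding energy_def by (auto intro!: integral_nonneg_AE Gamma_nonneg)

lemma energy_nn:
  assumes N: "sets N = sets borel" "finite_measure N" and f: "f \<in> algA \<mu> q"
  shows "ennreal (energy \<mu> q N f) = (\<integral>\<^sup>+ x. (\<integral>\<^sup>+ y. ennreal ((f x - f y)\<^sup>2 * q x y) \<partial>\<mu>) \<partial>N)"
  unfolding energy_def Gamma_nn[OF f, symmetric]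
  using energy_int[OF N f] by (subst nn_integral_eq_integral) (auto simp: Gamma_nonneg)


end


context JS begin
lemma nn_comb:
  assumes [measurable]: "F \<in> borel_measurable \<mu>" "G \<in> borel_measurable \<mu>"
    and nF: "\<And>y. 0 \<le> F y" and nG: "\<And>y. 0 \<le> G y" and A: "0 \<le> A" and B: "0 \<le> B"
    and CF0: "0 \<le> CF" and CG0: "0 \<le> CG"
    and CF: "(\<integral>\<^sup>+ y. ennreal (F y) \<partial>\<mu>) \<le> ennreal CF" and CG: "(\<integral>\<^sup>+ y. ennreal (G y) \<partial>\<mu>) \<le> ennreal CG"
  shows "(\<integral>\<^sup>+ y. ennreal (A * F y + B * G y) \<partial>\<mu>) \<le> ennreal (A * CF + B * CG)"
proof -
  have "(\<integral>\<^sup>+ y. ennreal (A * F y + B * G y) \<partial>\<mu>) = (\<integral>\<^sup>+ y. ennreal A * ennreal (F y) + ennreal B * ennreal (G y) \<partial>\<mu>)"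
    using nF nG A B by (intro nn_integral_cong) (simp add: ennreal_mult ennreal_plus[symmetric])
  also have "\<dots> = ennreal A * (\<integral>\<^sup>+ y. ennreal (F y) \<partial>\<mu>) + ennreal B * (\<integral>\<^sup>+ y. ennreal (G y) \<partial>\<mu>)"
    by (simp add: nn_integral_add nn_integral_cmult)
  also have "\<dots> \<le> ennreal A * ennreal CF + ennreal B * ennreal CG"
    by (intro add_mono mult_left_mono CF CG) auto
  also have "\<dots> = ennreal (A * CF + B * CG)"
    using A B CF0 CG0 by (simp add: ennreal_mult ennreal_plus)
  finally show ?thesis .
qed

lemma pw_q:
  assumes "(h x - h y)\<^sup>2 \<le> A * (f x - f y)\<^sup>2 + B * (g x - g y)\<^sup>2"
  shows "(h x - h y)\<^sup>2 * q x y \<le> A * ((f x - f y)\<^sup>2 * q x y) + B * ((g x - g y)\<^sup>2 * q x y)"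
proof -
  have "(h x - h y)\<^sup>2 * q x y \<le> (A * (f x - f y)\<^sup>2 + B * (g x - g y)\<^sup>2) * q x y"
    by (rule mult_right_mono[OF assms q_nonneg])
  then show ?thesis by (simp add: algebra_simps)
qed

lemma algA_comb:
  assumes f: "f \<in> algA \<mu> q" and g: "g \<in> algA \<mu> q" and hm: "h \<in> borel_measurable borel"
    and hb: "\<exists>C. \<forall>x. \<bar>h x\<bar> \<le> C" and A: "0 \<le> A" and B: "0 \<le> B"
    and pw: "\<And>x y. (h x - h y)\<^sup>2 \<le> A * (f x - f y)\<^sup>2 + B * (g x - g y)\<^sup>2"
  shows "h \<in> algA \<mu> q"
proof -
  from algA_D(3)[OF f] obtain CF0 where CF0: "\<And>x. (\<integral>\<^sup>+ y. ennreal ((f x - f y)\<^sup>2 * q x y) \<partial>\<mu>) \<le> ennreal CF0" by blast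
  from algA_D(3)[OF g] obtain CG0 where CG0: "\<And>x. (\<integral>\<^sup>+ y. ennreal ((g x - g y)\<^sup>2 * q x y) \<partial>\<mu>) \<le> ennreal CG0" by blast
  define CF where "CF = max CF0 0"
  define CG where "CG = max CG0 0"
  have CF: "(\<integral>\<^sup>+ y. ennreal ((f x - f y)\<^sup>2 * q x y) \<partial>\<mu>) \<le> ennreal CF" for x
    using CF0[of x] unfolding CF_def by (meson ennreal_leI max.cobounded1 order_trans)
  have CG: "(\<integral>\<^sup>+ y. ennreal ((g x - g y)\<^sup>2 * q x y) \<partial>\<mu>) \<le> ennreal CG" for x
    using CG0[of x] unfolding CG_def by (meson ennreal_leI max.cobounded1 order_trans)
  have [measurable]: "f \<in> borel_measurable \<mu>" "g \<in> borel_measurable \<mu>"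
    using algA_D(1)[OF f] algA_D(1)[OF g] meas_iff[OF sets_mu] by auto
  have qx[measurable]: "q x \<in> borel_measurable \<mu>" for x
    using measurable_Pair2[OF q_meas_pair[OF sets_mu], of x] sets_eq_imp_space_eq[OF sets_mu] by simp
  have "(\<integral>\<^sup>+ y. ennreal ((h x - h y)\<^sup>2 * q x y) \<partial>\<mu>) \<le> ennreal (A * CF + B * CG)" for x
  proof -
    have "(\<integral>\<^sup>+ y. ennreal ((h x - h y)\<^sup>2 * q x y) \<partial>\<mu>) \<le>
        (\<integral>\<^sup>+ y. ennreal (A * ((f x - f y)\<^sup>2 * q x y) + B * ((g x - g y)\<^sup>2 * q x y)) \<partial>\<mu>)"
      by (intro nn_integral_mono ennreal_leI pw_q pw)
    also have "\<dots> \<le> ennreal (A * CF + B * CG)"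
      by (rule nn_comb[OF _ _ _ _ A B _ _ CF[of x] CG[of x]]) (auto simp: CF_def CG_def)
    finally show ?thesis .
  qed
  then show ?thesis using hm hb meas_iff[OF sets_mu] unfolding algA_def by blast
qed

lemma algA_const: "(\<lambda>x. c) \<in> algA \<mu> q"
proof -
  have "\<exists>C. \<forall>x. \<bar>c\<bar> \<le> C" by auto
  moreover have "\<exists>C::real. \<forall>x. (\<integral>\<^sup>+ y. ennreal ((c - c)\<^sup>2 * q x y) \<partial>\<mu>) \<le> ennreal C"
    by (rule exI[of _ 0]) simp
  ultimately show ?thesis unfolding algA_def using meas_iff[OF sets_mu] by auto
qed

lemma sq2: "((u::real) + v)\<^sup>2 \<le> 2 * u\<^sup>2 + 2 * v\<^sup>2"
proof -
  have "0 \<le> (u - v)\<^sup>2" by simp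
  then show ?thesis by (simp add: power2_eq_square algebra_simps)
qed

lemma algA_add: assumes f: "f \<in> algA \<mu> q" and g: "g \<in> algA \<mu> q"
  shows "(\<lambda>x. f x + g x) \<in> algA \<mu> q"
proof (rule algA_comb[OF f g _ _ _ _ ])
  from algA_D(2)[OF f] algA_D(2)[OF g] obtain C1 C2 where c1: "\<And>x. \<bar>f x\<bar> \<le> C1" and c2: "\<And>x. \<bar>g x\<bar> \<le> C2" by blast
  have "\<bar>f x + g x\<bar> \<le> C1 + C2" for x
    using abs_triangle_ineq[of "f x" "g x"] c1[of x] c2[of x] by linarith
  then show "\<exists>C. \<forall>x. \<bar>f x + g x\<bar> \<le> C" by blast
  show "(\<lambda>x. f x + g x) \<in> borel_measurable borel" using algA_D(1)[OF f] algA_D(1)[OF g] by simp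
  show "((f x + g x) - (f y + g y))\<^sup>2 \<le> 2 * (f x - f y)\<^sup>2 + 2 * (g x - g y)\<^sup>2" for x y
  proof -
    have e: "(f x + g x) - (f y + g y) = (f x - f y) + (g x - g y)" by simp
    show ?thesis unfolding e by (rule sq2)
  qed
qed auto

lemma algA_scale: assumes f: "f \<in> algA \<mu> q"
  shows "(\<lambda>x. c * f x) \<in> algA \<mu> q"
proof (rule algA_comb[OF f f _ _ _ _ ])
  from algA_D(2)[OF f] obtain C1 where "\<And>x. \<bar>f x\<bar> \<le> C1" by blast
  then show "\<exists>C. \<forall>x. \<bar>c * f x\<bar> \<le> C" by (intro exI[of _ "\<bar>c\<bar> * C1"]) (simp add: abs_mult mult_left_mono)
  show "(\<lambda>x. c * f x) \<in> borel_measurable borel" using algA_D(1)[OF f] by simp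
  show "(c * f x - c * f y)\<^sup>2 \<le> c\<^sup>2 * (f x - f y)\<^sup>2 + 0 * (f x - f y)\<^sup>2" for x y
    by (simp add: power2_eq_square algebra_simps)
qed auto

lemma algA_diff: assumes f: "f \<in> algA \<mu> q" and g: "g \<in> algA \<mu> q"
  shows "(\<lambda>x. f x - g x) \<in> algA \<mu> q"
  using algA_add[OF f algA_scale[OF g, of "-1"]] by simp

lemma Gamma_comb:
  assumes f: "f \<in> algA \<mu> q" and g: "g \<in> algA \<mu> q" and h: "h \<in> algA \<mu> q"
    and A: "0 \<le> A" and B: "0 \<le> B"
    and pw: "\<And>x y. (h x - h y)\<^sup>2 \<le> A * (f x - f y)\<^sup>2 + B * (g x - g y)\<^sup>2"
  shows "Gamma \<mu> q h h x \<le> A * Gamma \<mu> q f f x + B * Gamma \<mu> q g g x"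
proof -
  have "Gamma \<mu> q h h x \<le> (\<integral> y. A * ((f x - f y)\<^sup>2 * q x y) + B * ((g x - g y)\<^sup>2 * q x y) \<partial>\<mu>)"
    unfolding Gamma_eq using D_int[OF f, of x] D_int[OF g, of x] D_int[OF h, of x]
    by (intro integral_mono pw_q pw) auto
  also have "\<dots> = A * Gamma \<mu> q f f x + B * Gamma \<mu> q g g x"
    unfolding Gamma_eq using D_int[OF f, of x] D_int[OF g, of x] by simp
  finally show ?thesis .
qed

lemma energy_comb:
  assumes N: "sets N = sets borel" "finite_measure N"
    and f: "f \<in> algA \<mu> q" and g: "g \<in> algA \<mu> q" and h: "h \<in> algA \<mu> q"
    and A: "0 \<le> A" and B: "0 \<le> B"
    and pw: "\<And>x y. (h x - h y)\<^sup>2 \<le> A * (f x - f y)\<^sup>2 + B * (g x - g y)\<^sup>2"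
  shows "energy \<mu> q N h \<le> A * energy \<mu> q N f + B * energy \<mu> q N g"
proof -
  have "energy \<mu> q N h \<le> (\<integral> x. A * Gamma \<mu> q f f x + B * Gamma \<mu> q g g x \<partial>N)"
    unfolding energy_def using energy_int[OF N f] energy_int[OF N g] energy_int[OF N h]
    by (intro integral_mono Gamma_comb[OF f g h A B pw]) auto
  also have "\<dots> = A * energy \<mu> q N f + B * energy \<mu> q N g"
    unfolding energy_def using energy_int[OF N f] energy_int[OF N g] by simp
  finally show ?thesis .
qed

lemma sq_tri: "(t::real) > 0 \<Longrightarrow> (a + b)\<^sup>2 \<le> (1 + t) * a\<^sup>2 + (1 + 1/t) * b\<^sup>2"
proof -
  assume t: "t > 0"
  have z: "0 \<le> (t * a - b)\<^sup>2" by simp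
  have e: "t * ((1 + t) * a\<^sup>2 + (1 + 1/t) * b\<^sup>2) = t * a\<^sup>2 + t * t * a\<^sup>2 + t * b\<^sup>2 + b\<^sup>2"
    using t by (simp add: field_simps)
  have "t * (a + b)\<^sup>2 \<le> t * ((1 + t) * a\<^sup>2 + (1 + 1/t) * b\<^sup>2)"
    unfolding e using z by (simp add: power2_eq_square algebra_simps)
  then show ?thesis using t by simp
qed

lemma energy_tri:
  assumes N: "sets N = sets borel" "finite_measure N"
    and f: "f \<in> algA \<mu> q" and g: "g \<in> algA \<mu> q" and t: "t > 0"
  shows "energy \<mu> q N (\<lambda>x. f x + g x) \<le> (1 + t) * energy \<mu> q N f + (1 + 1/t) * energy \<mu> q N g"
proof (rule energy_comb[OF N f g algA_add[OF f g]])
  show "(f x + g x - (f y + g y))\<^sup>2 \<le> (1 + t) * (f x - f y)\<^sup>2 + (1 + 1 / t) * (g x - g y)\<^sup>2" for x y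
  proof -
    have e: "f x + g x - (f y + g y) = (f x - f y) + (g x - g y)" by simp
    show ?thesis unfolding e by (rule sq_tri[OF t])
  qed
qed (use t in auto)

lemma energy_neg:
  assumes N: "sets N = sets borel" "finite_measure N" and f: "f \<in> algA \<mu> q"
  shows "energy \<mu> q N (\<lambda>x. - f x) = energy \<mu> q N f"
proof -
  have m: "(\<lambda>x. - f x) \<in> algA \<mu> q" using algA_scale[OF f, of "-1"] by simp
  have "energy \<mu> q N (\<lambda>x. - f x) \<le> 1 * energy \<mu> q N f + 0 * energy \<mu> q N f"
    by (rule energy_comb[OF N f f m]) (auto simp: power2_eq_square algebra_simps)
  moreover have "energy \<mu> q N f \<le> 1 * energy \<mu> q N (\<lambda>x. - f x) + 0 * energy \<mu> q N f"
    by (rule energy_comb[OF N m f f]) (auto simp: power2_eq_square algebra_simps)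
  ultimately show ?thesis by simp
qed

lemma energy_const: "energy \<mu> q N (\<lambda>x. c) = 0"
  unfolding energy_def Gamma_def by simp

end


context JS begin

lemma bdd_int:
  fixes f :: "'b \<Rightarrow> real"
  assumes N: "finite_measure N" and m: "f \<in> borel_measurable N" and b: "\<And>x. \<bar>f x\<bar> \<le> C"
  shows "integrable N f"
proof -
  interpret finite_measure N by (rule N)
  show ?thesis by (rule integrable_const_bound[where B=C]) (use m b in auto)
qed

lemma fatou_energy:
  assumes u: "u \<in> algA \<mu> q" and w: "\<And>m. w m \<in> algA \<mu> q"
    and conv: "AE x in \<mu>. (\<lambda>m. w m x) \<longlonglongrightarrow> 0"
    and ev: "eventually (\<lambda>m. energy \<mu> q \<mu> (\<lambda>x. u x - w m x) \<le> \<epsilon>) sequentially"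
    and eps: "0 \<le> \<epsilon>"
  shows "energy \<mu> q \<mu> u \<le> \<epsilon>"
proof -
  interpret prob_space \<mu> by (rule prob)
  have fin: "finite_measure \<mu>" by (rule finite_measure_axioms)
  define D where "D m x y = ennreal ((u x - w m x - (u y - w m y))\<^sup>2 * q x y)" for m x y
  have um: "(\<lambda>x. u x - w m x) \<in> algA \<mu> q" for m by (rule algA_diff[OF u w])
  have Dm: "(\<lambda>(x, y). D m x y) \<in> borel_measurable (\<mu> \<Otimes>\<^sub>M \<mu>)" for m
  proof -
    have "(\<lambda>(x, y). (u x - w m x - (u y - w m y))\<^sup>2 * q x y) \<in> borel_measurable (\<mu> \<Otimes>\<^sub>M \<mu>)"
      using D_meas[OF sets_mu algA_D(1)[OF um[of m]]] by simp
    from measurable_compose[OF this measurable_ennreal] show ?thesis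
      unfolding D_def by (simp add: case_prod_beta')
  qed
  have Dy: "D m x \<in> borel_measurable \<mu>" for m x
    using measurable_Pair2[OF Dm[of m], of x] sets_eq_imp_space_eq[OF sets_mu] by simp
  have Dx: "(\<lambda>x. \<integral>\<^sup>+ y. D m x y \<partial>\<mu>) \<in> borel_measurable \<mu>" for m
    by (rule borel_measurable_nn_integral) (rule Dm)
  have lim: "liminf (\<lambda>m. D m x y) = ennreal ((u x - u y)\<^sup>2 * q x y)"
    if "(\<lambda>m. w m x) \<longlonglongrightarrow> 0" "(\<lambda>m. w m y) \<longlonglongrightarrow> 0" for x y
  proof -
    have "(\<lambda>m. (u x - w m x - (u y - w m y))\<^sup>2 * q x y) \<longlonglongrightarrow> (u x - 0 - (u y - 0))\<^sup>2 * q x y"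
      by (intro tendsto_intros that)
    then have "(\<lambda>m. D m x y) \<longlonglongrightarrow> ennreal ((u x - u y)\<^sup>2 * q x y)"
      unfolding D_def by (intro tendsto_ennrealI) simp
    then show ?thesis by (intro lim_imp_Liminf) auto
  qed
  have AE2: "AE x in \<mu>. AE y in \<mu>. liminf (\<lambda>m. D m x y) = ennreal ((u x - u y)\<^sup>2 * q x y)"
    using conv
  proof eventually_elim
    case (elim x)
    show ?case using conv by eventually_elim (use lim elim in auto)
  qed
  have "ennreal (energy \<mu> q \<mu> u) = (\<integral>\<^sup>+ x. (\<integral>\<^sup>+ y. ennreal ((u x - u y)\<^sup>2 * q x y) \<partial>\<mu>) \<partial>\<mu>)"
    by (rule energy_nn[OF sets_mu fin u])
  also have "\<dots> = (\<integral>\<^sup>+ x. (\<integral>\<^sup>+ y. liminf (\<lambda>m. D m x y) \<partial>\<mu>) \<partial>\<mu>)"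
  proof (rule nn_integral_cong_AE)
    show "AE x in \<mu>. (\<integral>\<^sup>+ y. ennreal ((u x - u y)\<^sup>2 * q x y) \<partial>\<mu>) = (\<integral>\<^sup>+ y. liminf (\<lambda>m. D m x y) \<partial>\<mu>)"
      using AE2
    proof eventually_elim
      case (elim x)
      show ?case by (rule nn_integral_cong_AE) (use elim in \<open>auto elim!: eventually_mono\<close>)
    qed
  qed
  also have "\<dots> \<le> (\<integral>\<^sup>+ x. liminf (\<lambda>m. \<integral>\<^sup>+ y. D m x y \<partial>\<mu>) \<partial>\<mu>)"
    by (intro nn_integral_mono nn_integral_liminf Dy)
  also have "\<dots> \<le> liminf (\<lambda>m. \<integral>\<^sup>+ x. (\<integral>\<^sup>+ y. D m x y \<partial>\<mu>) \<partial>\<mu>)"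
    by (intro nn_integral_liminf Dx)
  also have "\<dots> = liminf (\<lambda>m. ennreal (energy \<mu> q \<mu> (\<lambda>x. u x - w m x)))"
    unfolding D_def using energy_nn[OF sets_mu fin um] by simp
  also have "\<dots> \<le> ennreal \<epsilon>"
    by (intro Liminf_le) (use ev in \<open>auto elim!: eventually_mono intro: ennreal_leI\<close>)
  finally show ?thesis using eps by (simp add: ennreal_le_iff)
qed

lemma le_eps:
  fixes a b :: real
  assumes h: "\<And>t. t > 0 \<Longrightarrow> a \<le> (1 + t) * b" and b: "0 \<le> b"
  shows "a \<le> b"
proof (rule ccontr)
  assume "\<not> a \<le> b"
  then have ab: "a > b" by simp
  define t where "t = (a - b) / (2 * (b + 1))"
  have t: "t > 0" using ab b unfolding t_def by simp
  have "t * b \<le> (a - b) / 2"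
  proof -
    have "t * b = ((a - b) / 2) * (b / (b + 1))" unfolding t_def by (simp add: field_simps)
    also have "\<dots> \<le> ((a - b) / 2) * 1"
      using ab b by (intro mult_left_mono) auto
    finally show ?thesis by simp
  qed
  then have "(1 + t) * b < a" using ab by (simp add: algebra_simps)
  with h[OF t] show False by simp
qed

end


context JS begin

lemma energy_cong: "(\<And>x. f x = g x) \<Longrightarrow> energy \<mu> q N f = energy \<mu> q N g"
  by (metis ext)

lemma energy_close:
  assumes g: "g \<in> algA \<mu> q" and ap: "approx_seq \<mu> q \<mu> fn g"
    and lim: "(\<lambda>n. energy \<mu> q \<mu> (fn n)) \<longlonglongrightarrow> e"
  shows "e = energy \<mu> q \<mu> g"
proof -
  interpret prob_space \<mu> by (rule prob)
  have fin: "finite_measure \<mu>" by (rule finite_measure_axioms)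
  note N = sets_mu fin
  from ap have fA: "\<And>n. fn n \<in> algA \<mu> q"
    and L2: "(\<lambda>n. \<integral> x. (fn n x - g x)\<^sup>2 \<partial>\<mu>) \<longlonglongrightarrow> 0"
    and Cau: "\<And>\<epsilon>. \<epsilon> > 0 \<Longrightarrow> \<exists>N. \<forall>m\<ge>N. \<forall>n\<ge>N. energy \<mu> q \<mu> (\<lambda>x. fn n x - fn m x) < \<epsilon>"
    unfolding approx_seq_def by auto
  define h where "h n x = fn n x - g x" for n x
  have hA: "h n \<in> algA \<mu> q" for n unfolding h_def by (rule algA_diff[OF fA g])
  have hint: "integrable \<mu> (\<lambda>x. (h n x)\<^sup>2)" for n
  proof -
    from algA_D(2)[OF hA[of n]] obtain C where C: "\<And>x. \<bar>h n x\<bar> \<le> C" by blast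
    have "\<bar>(h n x)\<^sup>2\<bar> \<le> C\<^sup>2" for x
      using power_mono[OF C[of x] abs_ge_zero, of 2] by simp
    moreover have "(\<lambda>x. (h n x)\<^sup>2) \<in> borel_measurable \<mu>"
      using algA_D(1)[OF hA[of n]] meas_iff[OF sets_mu] by (metis borel_measurable_power)
    ultimately show ?thesis by (intro bdd_int[OF fin]) auto
  qed
  have "\<exists>r::nat\<Rightarrow>nat. strict_mono r \<and> (AE x in \<mu>. (\<lambda>m. (h (r m) x)\<^sup>2) \<longlonglongrightarrow> 0)"
    by (rule tendsto_L1_AE_subseq[where M=\<mu> and u="\<lambda>n x. (h n x)\<^sup>2"]) (use hint L2 in \<open>auto simp: h_def\<close>)
  then obtain r :: "nat \<Rightarrow> nat" where r: "strict_mono r" and rAE: "AE x in \<mu>. (\<lambda>m. (h (r m) x)\<^sup>2) \<longlonglongrightarrow> 0"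
    by blast
  have rAE': "AE x in \<mu>. (\<lambda>m. h (r m) x) \<longlonglongrightarrow> 0"
    using rAE
  proof eventually_elim
    case (elim x)
    then have "(\<lambda>m. sqrt ((h (r m) x)\<^sup>2)) \<longlonglongrightarrow> sqrt 0" by (intro tendsto_intros)
    then have "(\<lambda>m. \<bar>h (r m) x\<bar>) \<longlonglongrightarrow> 0" by simp
    then show ?case by (simp add: tendsto_rabs_zero_iff)
  qed
  have Eh: "(\<lambda>n. energy \<mu> q \<mu> (h n)) \<longlonglongrightarrow> 0"
  proof (rule LIMSEQ_I)
    fix \<epsilon> :: real assume \<epsilon>: "\<epsilon> > 0"
    from Cau[of "\<epsilon>/2"] \<epsilon> obtain N where N: "\<And>m n. m \<ge> N \<Longrightarrow> n \<ge> N \<Longrightarrow> energy \<mu> q \<mu> (\<lambda>x. fn n x - fn m x) < \<epsilon>/2"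
      by auto
    have "energy \<mu> q \<mu> (h n) \<le> \<epsilon>/2" if n: "n \<ge> N" for n
    proof (rule fatou_energy[OF hA hA rAE' _])
      have "eventually (\<lambda>m. r m \<ge> N) sequentially"
        using eventually_ge_at_top[of N] by eventually_elim (meson order_trans seq_suble[OF r])
      then show "eventually (\<lambda>m. energy \<mu> q \<mu> (\<lambda>x. h n x - h (r m) x) \<le> \<epsilon>/2) sequentially"
      proof eventually_elim
        case (elim m)
        have "energy \<mu> q \<mu> (\<lambda>x. h n x - h (r m) x) = energy \<mu> q \<mu> (\<lambda>x. fn n x - fn (r m) x)"
          by (rule energy_cong) (simp add: h_def)
        also have "\<dots> < \<epsilon>/2" using N[OF elim n] .
        finally show ?case by simp
      qed
    qed (use \<epsilon> in auto)
    then have "\<forall>n\<ge>N. norm (energy \<mu> q \<mu> (h n) - 0) < \<epsilon>"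
    proof (intro allI impI)
      fix n assume "n \<ge> N" "\<And>n. n \<ge> N \<Longrightarrow> energy \<mu> q \<mu> (h n) \<le> \<epsilon>/2"
      then have "energy \<mu> q \<mu> (h n) \<le> \<epsilon>/2" by blast
      then show "norm (energy \<mu> q \<mu> (h n) - 0) < \<epsilon>"
        using \<epsilon> energy_nonneg[of \<mu> "h n"] by simp
    qed
    then show "\<exists>no. \<forall>n\<ge>no. norm (energy \<mu> q \<mu> (h n) - 0) < \<epsilon>" by blast
  qed
  have "e \<le> (1 + t) * energy \<mu> q \<mu> g" if t: "t > 0" for t
  proof (rule LIMSEQ_le[OF lim])
    show "(\<lambda>n. (1 + t) * energy \<mu> q \<mu> g + (1 + 1/t) * energy \<mu> q \<mu> (h n)) \<longlonglongrightarrow> (1 + t) * energy \<mu> q \<mu> g"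
      using tendsto_add[OF tendsto_const tendsto_mult[OF tendsto_const Eh], of "(1 + t) * energy \<mu> q \<mu> g" "1 + 1/t"] by simp
    show "\<exists>N. \<forall>n\<ge>N. energy \<mu> q \<mu> (fn n) \<le> (1 + t) * energy \<mu> q \<mu> g + (1 + 1/t) * energy \<mu> q \<mu> (h n)"
    proof (intro exI allI impI)
      fix n
      have "energy \<mu> q \<mu> (fn n) = energy \<mu> q \<mu> (\<lambda>x. g x + h n x)"
        by (rule energy_cong) (simp add: h_def)
      also have "\<dots> \<le> (1 + t) * energy \<mu> q \<mu> g + (1 + 1/t) * energy \<mu> q \<mu> (h n)"
        by (rule energy_tri[OF N g hA t])
      finally show "energy \<mu> q \<mu> (fn n) \<le> (1 + t) * energy \<mu> q \<mu> g + (1 + 1/t) * energy \<mu> q \<mu> (h n)" .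
    qed
  qed
  then have le1: "e \<le> energy \<mu> q \<mu> g" using le_eps energy_nonneg by blast
  have e0: "0 \<le> e" using lim by (rule LIMSEQ_le_const) (auto intro: energy_nonneg)
  have "energy \<mu> q \<mu> g \<le> (1 + t) * e" if t: "t > 0" for t
  proof (rule LIMSEQ_le[OF _ _])
    show "(\<lambda>n. energy \<mu> q \<mu> g) \<longlonglongrightarrow> energy \<mu> q \<mu> g" by simp
    show "(\<lambda>n. (1 + t) * energy \<mu> q \<mu> (fn n) + (1 + 1/t) * energy \<mu> q \<mu> (h n)) \<longlonglongrightarrow> (1 + t) * e"
      using tendsto_add[OF tendsto_mult[OF tendsto_const lim] tendsto_mult[OF tendsto_const Eh], of "1 + t" "1 + 1/t"] by simp
    show "\<exists>N. \<forall>n\<ge>N. energy \<mu> q \<mu> g \<le> (1 + t) * energy \<mu> q \<mu> (fn n) + (1 + 1/t) * energy \<mu> q \<mu> (h n)"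
    proof (intro exI allI impI)
      fix n
      have mh: "(\<lambda>x. - h n x) \<in> algA \<mu> q" using algA_scale[OF hA[of n], of "-1"] by simp
      have "energy \<mu> q \<mu> g = energy \<mu> q \<mu> (\<lambda>x. fn n x + (- h n x))"
        by (rule energy_cong) (simp add: h_def)
      also have "\<dots> \<le> (1 + t) * energy \<mu> q \<mu> (fn n) + (1 + 1/t) * energy \<mu> q \<mu> (\<lambda>x. - h n x)"
        by (rule energy_tri[OF N fA mh t])
      also have "energy \<mu> q \<mu> (\<lambda>x. - h n x) = energy \<mu> q \<mu> (h n)"
        using energy_neg[OF N hA[of n]] by simp
      finally show "energy \<mu> q \<mu> g \<le> (1 + t) * energy \<mu> q \<mu> (fn n) + (1 + 1/t) * energy \<mu> q \<mu> (h n)" .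
    qed
  qed
  then have "energy \<mu> q \<mu> g \<le> e" using le_eps e0 by blast
  with le1 show ?thesis by simp
qed

end


context JS begin

lemma energy_step:
  assumes N: "sets N = sets borel" "finite_measure N" and f: "f \<in> algA \<mu> q" and g: "g \<in> algA \<mu> q" and t: "t > 0"
  shows "energy \<mu> q N g \<le> (1 + t) * energy \<mu> q N f + (1 + 1/t) * energy \<mu> q N (\<lambda>x. g x - f x)"
proof -
  have "energy \<mu> q N g = energy \<mu> q N (\<lambda>x. f x + (g x - f x))" by (rule energy_cong) simp
  also have "\<dots> \<le> (1 + t) * energy \<mu> q N f + (1 + 1/t) * energy \<mu> q N (\<lambda>x. g x - f x)"
    by (rule energy_tri[OF N f algA_diff[OF g f] t])
  finally show ?thesis .
qed

lemma half_cancel: "(c::real) > 0 \<Longrightarrow> c * (e / (2 * c)) = e / 2"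
  by (simp add: field_simps)

lemma energy_cauchy_conv:
  assumes N: "sets N = sets borel" "finite_measure N" and fA: "\<And>n. fn n \<in> algA \<mu> q"
    and Cau: "\<And>\<epsilon>. \<epsilon> > 0 \<Longrightarrow> \<exists>M. \<forall>m\<ge>M. \<forall>n\<ge>M. energy \<mu> q N (\<lambda>x. fn n x - fn m x) < \<epsilon>"
  shows "\<exists>e. (\<lambda>n. energy \<mu> q N (fn n)) \<longlonglongrightarrow> e"
proof -
  define E where "E n = energy \<mu> q N (fn n)" for n
  obtain N1 where N1: "\<And>m n. m \<ge> N1 \<Longrightarrow> n \<ge> N1 \<Longrightarrow> energy \<mu> q N (\<lambda>x. fn n x - fn m x) < 1"
    using Cau[of 1] by auto
  define B where "B = 2 * E N1 + 2"
  have B0: "B > 0" unfolding B_def E_def using energy_nonneg[of N "fn N1"] by simp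
  have bnd: "E n \<le> B" if "n \<ge> N1" for n
  proof -
    have "E n \<le> (1 + 1) * E N1 + (1 + 1/1) * energy \<mu> q N (\<lambda>x. fn n x - fn N1 x)"
      unfolding E_def by (rule energy_step[OF N fA fA]) simp
    also have "\<dots> \<le> B" using N1[of N1 n] that unfolding B_def by simp
    finally show ?thesis .
  qed
  have one: "E n - E m < \<epsilon>" if "\<epsilon> > 0" "m \<ge> M" "n \<ge> M"
    and M: "\<And>m n. m \<ge> M \<Longrightarrow> n \<ge> M \<Longrightarrow> energy \<mu> q N (\<lambda>x. fn n x - fn m x) < \<epsilon> / (2 * (1 + 2 * (B + 1) / \<epsilon>))"
    and MN1: "M \<ge> N1" for \<epsilon> m n M
  proof -
    define t where "t = \<epsilon> / (2 * (B + 1))"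
    have t: "t > 0" unfolding t_def using that B0 by simp
    have it: "1/t = 2 * (B + 1) / \<epsilon>" unfolding t_def by simp
    have a: "E n \<le> (1 + t) * E m + (1 + 1/t) * energy \<mu> q N (\<lambda>x. fn n x - fn m x)"
      unfolding E_def by (rule energy_step[OF N fA fA t])
    have b: "(1 + 1/t) * energy \<mu> q N (\<lambda>x. fn n x - fn m x) < (1 + 1/t) * (\<epsilon> / (2 * (1 + 1/t)))"
      using M[OF that(2,3)] t unfolding it[symmetric] by (intro mult_strict_left_mono) (auto simp: add_pos_pos)
    have c: "(1 + 1/t) * (\<epsilon> / (2 * (1 + 1/t))) = \<epsilon>/2"
      using half_cancel[of "1 + 1/t" \<epsilon>] t by (simp add: add_pos_pos)
    have d: "t * E m \<le> t * B" using bnd[of m] that t by simp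
    have e: "t * B < \<epsilon>/2" unfolding t_def using that B0 by (simp add: field_simps)
    have f: "(1 + t) * E m = E m + t * E m" by (simp add: algebra_simps)
    show ?thesis using a b c d e f by linarith
  qed
  have "Cauchy E"
  proof (rule CauchyI)
    fix \<epsilon> :: real assume e: "\<epsilon> > 0"
    have "\<epsilon> / (2 * (1 + 2 * (B + 1) / \<epsilon>)) > 0" using e B0 by (simp add: add_pos_pos)
    from Cau[OF this] obtain M2 where M2: "\<And>m n. m \<ge> M2 \<Longrightarrow> n \<ge> M2 \<Longrightarrow> energy \<mu> q N (\<lambda>x. fn n x - fn m x) < \<epsilon> / (2 * (1 + 2 * (B + 1) / \<epsilon>))"
      by auto
    define M where "M = max M2 N1"
    have M: "\<And>m n. m \<ge> M \<Longrightarrow> n \<ge> M \<Longrightarrow> energy \<mu> q N (\<lambda>x. fn n x - fn m x) < \<epsilon> / (2 * (1 + 2 * (B + 1) / \<epsilon>))"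
      using M2 unfolding M_def by auto
    have "norm (E m - E n) < \<epsilon>" if "m \<ge> M" "n \<ge> M" for m n
      using one[OF e that(1,2) M] one[OF e that(2,1) M] unfolding M_def by auto
    then show "\<exists>M. \<forall>m\<ge>M. \<forall>n\<ge>M. norm (E m - E n) < \<epsilon>" by blast
  qed
  then show ?thesis unfolding E_def[abs_def] by (simp add: Cauchy_convergent_iff convergent_def)
qed

lemma algA_approx:
  assumes N: "finite_measure N" and g: "g \<in> algA \<mu> q"
  shows "approx_seq \<mu> q N (\<lambda>n. g) g"
  unfolding approx_seq_def using g energy_const[of N 0] by (auto intro!: exI[of _ 0])

lemma algA_sq_int:
  assumes N: "finite_measure N" "sets N = sets borel" and g: "g \<in> algA \<mu> q"
  shows "integrable N (\<lambda>x. (g x)\<^sup>2)"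
proof -
  from algA_D(2)[OF g] obtain C where C: "\<And>x. \<bar>g x\<bar> \<le> C" by blast
  have "\<bar>(g x)\<^sup>2\<bar> \<le> C\<^sup>2" for x
    using power_mono[OF C[of x] abs_ge_zero, of 2] by simp
  moreover have "(\<lambda>x. (g x)\<^sup>2) \<in> borel_measurable N"
    using algA_D(1)[OF g] meas_iff[OF N(2)] by (metis borel_measurable_power)
  ultimately show ?thesis by (intro bdd_int[OF N(1)]) auto
qed

lemma form_val_algA:
  assumes g: "g \<in> algA \<mu> q"
  shows "form_val \<mu> q \<mu> g = energy \<mu> q \<mu> g"
proof -
  interpret prob_space \<mu> by (rule prob)
  have fin: "finite_measure \<mu>" by (rule finite_measure_axioms)
  have ex: "\<exists>e fn. approx_seq \<mu> q \<mu> fn g \<and> (\<lambda>n. energy \<mu> q \<mu> (fn n)) \<longlonglongrightarrow> e"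
    by (rule exI[of _ "energy \<mu> q \<mu> g"], rule exI[of _ "\<lambda>n. g"]) (simp add: algA_approx[OF fin g])
  have "\<exists>fn. approx_seq \<mu> q \<mu> fn g \<and> (\<lambda>n. energy \<mu> q \<mu> (fn n)) \<longlonglongrightarrow> form_val \<mu> q \<mu> g"
    unfolding form_val_def by (rule someI_ex) (use ex in blast)
  then obtain fn where "approx_seq \<mu> q \<mu> fn g" "(\<lambda>n. energy \<mu> q \<mu> (fn n)) \<longlonglongrightarrow> form_val \<mu> q \<mu> g" by blast
  from energy_close[OF g this] show ?thesis .
qed

lemma algA_form_dom:
  assumes g: "g \<in> algA \<mu> q"
  shows "g \<in> form_dom \<mu> q \<mu>"
proof -
  interpret prob_space \<mu> by (rule prob)
  have fin: "finite_measure \<mu>" by (rule finite_measure_axioms)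
  show ?thesis unfolding form_dom_def
    using algA_approx[OF fin g] algA_sq_int[OF fin sets_mu g] algA_D(1)[OF g] meas_iff[OF sets_mu] by auto
qed

end



lemma exp_sub_one_bound: "\<bar>1 - exp (w::real)\<bar> \<le> \<bar>w\<bar> * exp \<bar>w\<bar>"
proof (cases "w \<ge> 0")
  case True
  have "1 - w \<le> exp (- w)" using exp_ge_add_one_self[of "-w"] by simp
  then have "exp w * (1 - w) \<le> exp w * exp (- w)" by (intro mult_left_mono) auto
  then have "exp w - w * exp w \<le> 1" by (simp add: algebra_simps exp_minus_inverse)
  moreover have "1 \<le> exp w" using True by simp
  ultimately show ?thesis using True by simp
next
  case False
  have "1 + w \<le> exp w" by (rule exp_ge_add_one_self)
  moreover have "exp w \<le> 1" using False by simp
  moreover have "(-w) * 1 \<le> (-w) * exp (-w)" using False by (intro mult_left_mono) auto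
  moreover have e1: "\<bar>w\<bar> * exp \<bar>w\<bar> = (-w) * exp (-w)" using False by simp
  moreover have e2: "\<bar>1 - exp w\<bar> = 1 - exp w" using \<open>exp w \<le> 1\<close> by simp
  ultimately show ?thesis by linarith
qed

lemma ph_diff:
  fixes a b N u :: real
  assumes ab: "\<bar>a - b\<bar> \<le> u"
  shows "(exp (min a N / 2) - exp (min b N / 2))\<^sup>2 \<le> exp (min a N) * (exp u * (u / 2)\<^sup>2)"
proof -
  define a' where "a' = min a N"
  define b' where "b' = min b N"
  define w where "w = (b' - a') / 2"
  have ab': "\<bar>a' - b'\<bar> \<le> u" using ab unfolding a'_def b'_def by linarith
  have "\<bar>b' - a'\<bar> \<le> u" using ab' by (simp add: abs_minus_commute)
  then have w: "\<bar>w\<bar> \<le> u / 2" unfolding w_def by simp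
  have bw: "b' / 2 = a' / 2 + w" unfolding w_def by (simp add: field_simps)
  have "exp (b' / 2) = exp (a' / 2) * exp w" unfolding bw by (rule exp_add)
  then have "(exp (a' / 2) - exp (b' / 2))\<^sup>2 = (exp (a' / 2))\<^sup>2 * (1 - exp w)\<^sup>2"
    by (simp add: power2_eq_square algebra_simps)
  also have "(exp (a' / 2))\<^sup>2 = exp a'"
  proof -
    have "(exp (a' / 2))\<^sup>2 = exp (a' / 2) * exp (a' / 2)" by (simp add: power2_eq_square)
    also have "\<dots> = exp (a' / 2 + a' / 2)" by (rule exp_add[symmetric])
    finally show ?thesis by simp
  qed
  also have "(1 - exp w)\<^sup>2 \<le> (\<bar>w\<bar> * exp \<bar>w\<bar>)\<^sup>2"
    using exp_sub_one_bound[of w] by (metis abs_ge_zero power2_abs power_mono)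
  also have "(\<bar>w\<bar> * exp \<bar>w\<bar>)\<^sup>2 = w\<^sup>2 * (exp \<bar>w\<bar> * exp \<bar>w\<bar>)"
    by (simp add: power2_eq_square)
  also have "exp \<bar>w\<bar> * exp \<bar>w\<bar> = exp (\<bar>w\<bar> + \<bar>w\<bar>)" by (rule exp_add[symmetric])
  also have "w\<^sup>2 * exp (\<bar>w\<bar> + \<bar>w\<bar>) \<le> (u / 2)\<^sup>2 * exp u"
  proof (rule mult_mono)
    show "w\<^sup>2 \<le> (u / 2)\<^sup>2" using w by (metis abs_ge_zero power2_abs power_mono)
    show "exp (\<bar>w\<bar> + \<bar>w\<bar>) \<le> exp u" using w by simp
  qed auto
  finally have "(exp (a' / 2) - exp (b' / 2))\<^sup>2 \<le> exp a' * ((u / 2)\<^sup>2 * exp u)"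
    by (simp add: mult_left_mono)
  then show ?thesis unfolding a'_def b'_def by (simp add: mult.commute)
qed

lemma CS_real:
  fixes F G :: "'a \<Rightarrow> real"
  assumes F: "integrable M F" and G: "integrable M G" and F0: "\<And>x. 0 \<le> F x" and G0: "\<And>x. 0 \<le> G x"
  shows "integrable M (\<lambda>x. sqrt (F x) * sqrt (G x))"
    "(\<integral> x. sqrt (F x) * sqrt (G x) \<partial>M)\<^sup>2 \<le> (\<integral> x. F x \<partial>M) * (\<integral> x. G x \<partial>M)"
proof -
  have [measurable]: "F \<in> borel_measurable M" "G \<in> borel_measurable M" using F G by auto
  have bnd: "sqrt (F x) * sqrt (G x) \<le> F x + G x" for x
    using arith_geo_mean_sqrt[OF F0[of x] G0[of x]] F0[of x] G0[of x] by (simp add: real_sqrt_mult)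
  show int: "integrable M (\<lambda>x. sqrt (F x) * sqrt (G x))"
    by (rule Bochner_Integration.integrable_bound[OF Bochner_Integration.integrable_add[OF F G]])
       (use bnd F0 G0 in auto)
  have "ennreal (\<integral> x. sqrt (F x) * sqrt (G x) \<partial>M) = (\<integral>\<^sup>+ x. ennreal (sqrt (F x) * sqrt (G x)) \<partial>M)"
    using int F0 G0 by (subst nn_integral_eq_integral) (auto intro!: AE_I2)
  also have "\<dots> = (\<integral>\<^sup>+ x. ennreal (sqrt (F x)) * ennreal (sqrt (G x)) \<partial>M)"
    using F0 G0 by (intro nn_integral_cong) (simp add: ennreal_mult)
  finally have e1: "ennreal (\<integral> x. sqrt (F x) * sqrt (G x) \<partial>M) = (\<integral>\<^sup>+ x. ennreal (sqrt (F x)) * ennreal (sqrt (G x)) \<partial>M)" .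
  have sqF: "(\<integral>\<^sup>+ x. ennreal (sqrt (F x)) ^ 2 \<partial>M) = ennreal (\<integral> x. F x \<partial>M)"
  proof -
    have "(\<integral>\<^sup>+ x. ennreal (sqrt (F x)) ^ 2 \<partial>M) = (\<integral>\<^sup>+ x. ennreal (F x) \<partial>M)"
      using F0 by (intro nn_integral_cong) (subst ennreal_power, auto)
    also have "\<dots> = ennreal (\<integral> x. F x \<partial>M)"
      by (rule nn_integral_eq_integral) (use F F0 in \<open>auto intro!: AE_I2\<close>)
    finally show ?thesis .
  qed
  have sqG: "(\<integral>\<^sup>+ x. ennreal (sqrt (G x)) ^ 2 \<partial>M) = ennreal (\<integral> x. G x \<partial>M)"
  proof -
    have "(\<integral>\<^sup>+ x. ennreal (sqrt (G x)) ^ 2 \<partial>M) = (\<integral>\<^sup>+ x. ennreal (G x) \<partial>M)"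
      using G0 by (intro nn_integral_cong) (subst ennreal_power, auto)
    also have "\<dots> = ennreal (\<integral> x. G x \<partial>M)"
      by (rule nn_integral_eq_integral) (use G G0 in \<open>auto intro!: AE_I2\<close>)
    finally show ?thesis .
  qed
  have "(ennreal (\<integral> x. sqrt (F x) * sqrt (G x) \<partial>M))\<^sup>2 \<le> ennreal (\<integral> x. F x \<partial>M) * ennreal (\<integral> x. G x \<partial>M)"
    unfolding e1 sqF[symmetric] sqG[symmetric] by (rule Cauchy_Schwarz_nn_integral) auto
  moreover have "0 \<le> (\<integral> x. sqrt (F x) * sqrt (G x) \<partial>M)" using F0 G0 by (auto intro!: integral_nonneg_AE AE_I2)
  moreover have "0 \<le> (\<integral> x. F x \<partial>M)" "0 \<le> (\<integral> x. G x \<partial>M)" using F0 G0 by (auto intro!: integral_nonneg_AE)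
  ultimately show "(\<integral> x. sqrt (F x) * sqrt (G x) \<partial>M)\<^sup>2 \<le> (\<integral> x. F x \<partial>M) * (\<integral> x. G x \<partial>M)"
    by (simp add: ennreal_power ennreal_mult[symmetric])
qed


lemma final_alg:
  fixes a b e p m k \<kappa>2 \<beta> L r K s s' :: real
  assumes a0: "0 \<le> a" and b0: "0 \<le> b" and e0: "0 \<le> e" and p0: "0 \<le> p" and L0: "0 \<le> L"
    and r0: "0 < r" and K0: "0 < K" and s'0: "0 < s'" and s's: "s' \<le> s"
    and rs: "r \<le> s' * (1 / K) / (4 + L * s')"
    and main: "a \<le> r * (2 * K * e + K * L / 2 * a) + \<beta> * m\<^sup>2"
    and mbp: "m\<^sup>2 \<le> b * p" and pak: "p\<^sup>2 \<le> a * k" and k1: "1 \<le> k" and kk: "k\<^sup>2 \<le> \<kappa>2" and b1: "1 \<le> \<beta>"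
  shows "a \<le> s * e + 16 * \<kappa>2 * \<beta> ^ 3 * (4 + L * s') * b\<^sup>2"
proof -
  define t where "t = r * K"
  define y where "y = t * L"
  have D0: "0 < 4 + L * s'" using L0 s'0 by (simp add: add_pos_nonneg)
  have h1: "t * (4 + L * s') \<le> s'"
  proof -
    have c: "0 < K * (4 + L * s')" using K0 D0 by simp
    have "r \<le> s' / (K * (4 + L * s'))" using rs by simp
    then have "r * (K * (4 + L * s')) \<le> s'" using pos_le_divide_eq[OF c] by simp
    then show ?thesis unfolding t_def by (simp add: algebra_simps)
  qed
  have t0: "0 < t" unfolding t_def using r0 K0 by simp
  have st: "(2 - y) * a \<le> 4 * t * e + 2 * \<beta> * m\<^sup>2"
    using main unfolding y_def t_def by (simp add: algebra_simps)
  have h2: "4 * t \<le> s' * (1 - y)" using h1 unfolding y_def by (simp add: algebra_simps)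
  have h3: "4 * t * e \<le> s' * (1 - y) * e" using h2 e0 by (intro mult_right_mono)
  have h4: "2 * \<beta> * m\<^sup>2 \<le> 2 * \<beta> * (b * p)" using mbp b1 by (intro mult_left_mono) auto
  define Z where "Z = \<beta>\<^sup>2 * b\<^sup>2 * k"
  have Z0: "0 \<le> Z" unfolding Z_def using k1 by simp
  have h5: "2 * \<beta> * (b * p) \<le> a + Z"
  proof (rule power2_le_imp_le)
    have "(2 * \<beta> * (b * p))\<^sup>2 = 4 * (\<beta>\<^sup>2 * b\<^sup>2) * p\<^sup>2" by (simp add: power2_eq_square algebra_simps)
    also have "\<dots> \<le> 4 * (\<beta>\<^sup>2 * b\<^sup>2) * (a * k)" using pak by (intro mult_left_mono) auto
    also have "\<dots> = 4 * a * Z" unfolding Z_def by (simp add: algebra_simps)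
    also have "\<dots> \<le> (a + Z)\<^sup>2"
    proof -
      have "0 \<le> (a - Z)\<^sup>2" by simp
      then show ?thesis by (simp add: power2_eq_square algebra_simps)
    qed
    finally show "(2 * \<beta> * (b * p))\<^sup>2 \<le> (a + Z)\<^sup>2" .
  qed (use a0 Z0 in simp)
  have h6: "(1 - y) * a \<le> (1 - y) * (s' * e) + Z"
  proof -
    have "(2 - y) * a = a + (1 - y) * a" by (simp add: algebra_simps)
    moreover have "s' * (1 - y) * e = (1 - y) * (s' * e)" by (simp add: algebra_simps)
    ultimately show ?thesis using st h3 h4 h5 by linarith
  qed
  have h7: "4 \<le> (1 - y) * (4 + L * s')"
  proof -
    have "L * (t * (4 + L * s')) \<le> L * s'" using h1 L0 by (intro mult_left_mono)
    then show ?thesis unfolding y_def by (simp add: algebra_simps)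
  qed
  have y1: "0 < 1 - y"
  proof (rule ccontr)
    assume "\<not> 0 < 1 - y"
    then have "(1 - y) * (4 + L * s') \<le> 0" using D0 by (simp add: mult_nonpos_nonneg)
    with h7 show False by simp
  qed
  have h8: "a \<le> s' * e + Z / (1 - y)"
  proof -
    have eq: "(1 - y) * (s' * e + Z / (1 - y)) = (1 - y) * (s' * e) + Z" using y1 by (simp add: field_simps)
    have "(1 - y) * a \<le> (1 - y) * (s' * e + Z / (1 - y))" unfolding eq using h6 .
    then show ?thesis using y1 by simp
  qed
  have h9: "Z / (1 - y) \<le> Z * (4 + L * s') / 4"
  proof -
    have "1 / (1 - y) \<le> (4 + L * s') / 4" using h7 y1 by (simp add: field_simps)
    then have "Z * (1 / (1 - y)) \<le> Z * ((4 + L * s') / 4)" using Z0 by (intro mult_left_mono)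
    then show ?thesis by simp
  qed
  have h10: "Z * (4 + L * s') / 4 \<le> 16 * \<kappa>2 * \<beta> ^ 3 * (4 + L * s') * b\<^sup>2"
  proof -
    have "k * 1 \<le> k * k" using k1 by (intro mult_left_mono) auto
    then have kk': "k \<le> \<kappa>2" using kk by (simp add: power2_eq_square)
    have bb: "\<beta>\<^sup>2 \<le> \<beta> ^ 3" using b1 by (simp add: power2_eq_square power3_eq_cube)
    have "\<beta>\<^sup>2 * k \<le> \<beta> ^ 3 * \<kappa>2" using kk' bb k1 b1 by (intro mult_mono) auto
    moreover have "0 \<le> \<beta> ^ 3 * \<kappa>2" using b1 kk' k1 by simp
    ultimately have "\<beta>\<^sup>2 * k / 4 \<le> 16 * (\<beta> ^ 3 * \<kappa>2)" by linarith
    then have "(\<beta>\<^sup>2 * k / 4) * ((4 + L * s') * b\<^sup>2) \<le> (16 * (\<beta> ^ 3 * \<kappa>2)) * ((4 + L * s') * b\<^sup>2)"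
      using D0 by (intro mult_right_mono) auto
    then show ?thesis unfolding Z_def by (simp add: algebra_simps)
  qed
  have "s' * e \<le> s * e" using s's e0 by (intro mult_right_mono)
  then show ?thesis using h8 h9 h10 by linarith
qed




locale JSV = JS \<mu> q for \<mu> :: "'a::polish_space measure" and q +
  fixes V :: "'a \<Rightarrow> real" and \<beta> :: "real \<Rightarrow> real" and \<kappa>1 :: real
  assumes lambda_fin: "\<exists>C::real. \<forall>x. (\<integral>\<^sup>+ y. ennreal (min 1 ((dist x y)\<^sup>2) * q x y) \<partial>\<mu>) \<le> ennreal C"
    and V_meas: "V \<in> borel_measurable borel"
    and V_int: "integrable \<mu> (\<lambda>x. exp (V x))" and V_one: "(\<integral> x. exp (V x) \<partial>\<mu>) = 1"
    and beta_pos: "\<And>r. r > 0 \<Longrightarrow> \<beta> r > 0"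
    and SPI: "\<And>r f. r > 0 \<Longrightarrow> f \<in> form_dom \<mu> q \<mu> \<Longrightarrow>
               (\<integral> x. (f x)\<^sup>2 \<partial>\<mu>) \<le> r * form_val \<mu> q \<mu> f + \<beta> r * (\<integral> x. \<bar>f x\<bar> \<partial>\<mu>)\<^sup>2"
    and kappa1_pos: "\<kappa>1 > 0"
    and kappa2_fin: "integrable \<mu> (\<lambda>x. exp (- 2 * V x))"
    and V_lip: "\<And>x y. q x y > 0 \<Longrightarrow> \<bar>V x - V y\<bar> \<le> \<kappa>1 * min 1 (dist x y)"
begin

abbreviation "MV \<equiv> density \<mu> (\<lambda>x. ennreal (exp (V x)))"

lemma Vm[measurable]: "V \<in> borel_measurable \<mu>"
  by (rule meas_iff[OF sets_mu, THEN iffD2, OF V_meas])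

lemma sets_MV: "sets MV = sets borel" using sets_mu by simp

lemma prob_MV: "prob_space MV"
proof (rule prob_spaceI)
  have sp: "space MV = space \<mu>" by (rule space_density)
  have "emeasure MV (space MV) = (\<integral>\<^sup>+ x. ennreal (exp (V x)) * indicator (space \<mu>) x \<partial>\<mu>)"
    unfolding sp by (rule emeasure_density) auto
  also have "\<dots> = (\<integral>\<^sup>+ x. ennreal (exp (V x)) \<partial>\<mu>)"
    by (rule nn_integral_cong) simp
  also have "\<dots> = ennreal (\<integral> x. exp (V x) \<partial>\<mu>)"
    using V_int by (intro nn_integral_eq_integral) auto
  finally show "emeasure MV (space MV) = 1" using V_one by simp
qed

lemma fin_MV: "finite_measure MV"
  using prob_MV prob_space.finite_measure by blast

lemma int_MV:
  assumes f: "f \<in> borel_measurable borel"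
  shows "(\<integral> x. f x \<partial>MV) = (\<integral> x. exp (V x) * f x \<partial>\<mu>)"
  using f meas_iff[OF sets_mu] by (subst integral_density) auto

lemma prob_mu: "prob_space \<mu>" by (rule prob)

lemma fin_mu: "finite_measure \<mu>"
  using prob prob_space.finite_measure by blast

lemma int_mult_bdd:
  fixes f g :: "'a \<Rightarrow> real"
  assumes f: "integrable \<mu> f" and g: "g \<in> borel_measurable \<mu>" and b: "\<And>x. \<bar>g x\<bar> \<le> C"
  shows "integrable \<mu> (\<lambda>x. f x * g x)"
proof (rule Bochner_Integration.integrable_bound[of \<mu> "\<lambda>x. C * f x"])
  show "integrable \<mu> (\<lambda>x. C * f x)" using f by simp
  show "(\<lambda>x. f x * g x) \<in> borel_measurable \<mu>" using f g by auto
  show "AE x in \<mu>. norm (f x * g x) \<le> norm (C * f x)"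
  proof (rule AE_I2)
    fix x
    have "\<bar>f x\<bar> * \<bar>g x\<bar> \<le> \<bar>f x\<bar> * C" using b[of x] by (intro mult_left_mono) auto
    also have "\<dots> \<le> \<bar>f x\<bar> * \<bar>C\<bar>" by (intro mult_left_mono) auto
    also have "\<dots> = \<bar>C * f x\<bar>" by (simp add: abs_mult)
    finally show "norm (f x * g x) \<le> norm (C * f x)" by (simp add: abs_mult)
  qed
qed

definition lam where "lam = jump_lambda \<mu> q"

lemma lam_bound:
  shows "integrable \<mu> (\<lambda>y. min 1 ((dist x y)\<^sup>2) * q x y)"
    and "(\<integral> y. min 1 ((dist x y)\<^sup>2) * q x y \<partial>\<mu>) \<le> lam"
    and "0 \<le> lam"
proof -
  from lambda_fin obtain C where C: "\<And>x. (\<integral>\<^sup>+ y. ennreal (min 1 ((dist x y)\<^sup>2) * q x y) \<partial>\<mu>) \<le> ennreal C"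
    by blast
  have qx[measurable]: "q x \<in> borel_measurable \<mu>" for x
    using measurable_Pair2[OF q_meas_pair[OF sets_mu], of x] sets_eq_imp_space_eq[OF sets_mu] by simp
  have dm[measurable]: "(\<lambda>y. dist x y) \<in> borel_measurable \<mu>" for x
    by (rule meas_iff[OF sets_mu, THEN iffD2]) measurable
  have nn: "0 \<le> min 1 ((dist x y)\<^sup>2) * q x y" for x y by (simp add: q_nonneg)
  have int: "integrable \<mu> (\<lambda>y. min 1 ((dist x y)\<^sup>2) * q x y)" for x
    by (rule integrableI_nonneg) (auto intro!: AE_I2 nn le_less_trans[OF C])
  then show "integrable \<mu> (\<lambda>y. min 1 ((dist x y)\<^sup>2) * q x y)" .
  define I where "I x = (\<integral> y. min 1 ((dist x y)\<^sup>2) * q x y \<partial>\<mu>)" for x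
  have I0: "0 \<le> I x" for x unfolding I_def by (auto intro!: integral_nonneg_AE AE_I2 nn)
  have eqI: "(\<integral>\<^sup>+ y. ennreal (min 1 ((dist x y)\<^sup>2) * q x y) \<partial>\<mu>) = ennreal (I x)" for x
    unfolding I_def using int[of x] by (intro nn_integral_eq_integral) (auto intro!: AE_I2 nn)
  have IC: "I x \<le> max C 0" for x
    using C[of x] unfolding eqI by (metis ennreal_le_iff2 I0 max.cobounded1 max.cobounded2 order_trans ennreal_le_iff)
  have lam_eq: "lam = (SUP x. I x)"
    unfolding lam_def jump_lambda_def eqI using I0 by simp
  have bdd: "bdd_above (range I)" using IC by (intro bdd_aboveI2[where M="max C 0"]) auto
  show "I x \<le> lam" unfolding lam_eq by (rule cSUP_upper[OF _ bdd]) simp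
  then show "0 \<le> lam" using I0[of x] by linarith
qed

end


context JSV begin

lemma min_sq: "0 \<le> (d::real) \<Longrightarrow> (min 1 d)\<^sup>2 = min 1 (d\<^sup>2)"
proof (cases "d \<le> 1")
  case True
  assume "0 \<le> d"
  then have "d\<^sup>2 \<le> 1" using True by (simp add: power_le_one)
  then show ?thesis using True by simp
next
  case False
  then have "1 \<le> d\<^sup>2" by (simp add: one_le_power)
  then show ?thesis using False by simp
qed

lemma exp_half_sq: "(exp (z / 2))\<^sup>2 = exp (z::real)"
proof -
  have "(exp (z / 2))\<^sup>2 = exp (z / 2) * exp (z / 2)" by (simp add: power2_eq_square)
  also have "\<dots> = exp (z / 2 + z / 2)" by (rule exp_add[symmetric])
  finally show ?thesis by simp
qed

lemma pw_core:
  assumes q: "q x y > 0"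
  shows "(h x * exp (min (V x) n / 2) - h y * exp (min (V y) n / 2))\<^sup>2 \<le>
     2 * exp (min (V y) n) * (h x - h y)\<^sup>2 + 2 * (h x)\<^sup>2 * (exp (min (V x) n) * (exp \<kappa>1 * (\<kappa>1\<^sup>2 / 4 * min 1 ((dist x y)\<^sup>2))))"
proof -
  define px where "px = exp (min (V x) n / 2)"
  define py where "py = exp (min (V y) n / 2)"
  define u where "u = \<kappa>1 * min 1 (dist x y)"
  have e: "h x * px - h y * py = py * (h x - h y) + h x * (px - py)" by (simp add: algebra_simps)
  have s1: "(h x * px - h y * py)\<^sup>2 \<le> 2 * (py * (h x - h y))\<^sup>2 + 2 * (h x * (px - py))\<^sup>2"
    unfolding e by (rule sq2)
  have py2: "py\<^sup>2 = exp (min (V y) n)" unfolding py_def by (rule exp_half_sq)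
  have Vu: "\<bar>V x - V y\<bar> \<le> u" unfolding u_def by (rule V_lip[OF q])
  have pd: "(px - py)\<^sup>2 \<le> exp (min (V x) n) * (exp u * (u / 2)\<^sup>2)"
    unfolding px_def py_def by (rule ph_diff[OF Vu])
  have u1: "u \<le> \<kappa>1" unfolding u_def using kappa1_pos by (simp add: mult_le_cancel_left1)
  have u2: "(u / 2)\<^sup>2 = \<kappa>1\<^sup>2 / 4 * min 1 ((dist x y)\<^sup>2)"
    unfolding u_def using min_sq[of "dist x y"] by (simp add: power2_eq_square field_simps)
  have "exp u * (u / 2)\<^sup>2 \<le> exp \<kappa>1 * (u / 2)\<^sup>2" using u1 by (intro mult_right_mono) auto
  then have pd': "(px - py)\<^sup>2 \<le> exp (min (V x) n) * (exp \<kappa>1 * (\<kappa>1\<^sup>2 / 4 * min 1 ((dist x y)\<^sup>2)))"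
    using pd unfolding u2 by (meson exp_gt_zero less_imp_le mult_left_mono order_trans)
  have "2 * (h x * (px - py))\<^sup>2 = 2 * (h x)\<^sup>2 * (px - py)\<^sup>2" by (simp add: power_mult_distrib)
  also have "\<dots> \<le> 2 * (h x)\<^sup>2 * (exp (min (V x) n) * (exp \<kappa>1 * (\<kappa>1\<^sup>2 / 4 * min 1 ((dist x y)\<^sup>2))))"
    using pd' by (intro mult_left_mono) auto
  finally have t2: "2 * (h x * (px - py))\<^sup>2 \<le> 2 * (h x)\<^sup>2 * (exp (min (V x) n) * (exp \<kappa>1 * (\<kappa>1\<^sup>2 / 4 * min 1 ((dist x y)\<^sup>2))))" .
  have t1: "2 * (py * (h x - h y))\<^sup>2 = 2 * exp (min (V y) n) * (h x - h y)\<^sup>2"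
    using py2 by (simp add: power_mult_distrib)
  show ?thesis using s1 t1 t2 unfolding px_def py_def by linarith
qed

lemma Vy_le: assumes "q x y > 0" shows "exp (V y) \<le> exp \<kappa>1 * exp (V x)"
proof -
  have "\<bar>V x - V y\<bar> \<le> \<kappa>1 * min 1 (dist x y)" by (rule V_lip[OF assms])
  also have "\<dots> \<le> \<kappa>1" using kappa1_pos by (simp add: mult_le_cancel_left1)
  finally have "V y \<le> \<kappa>1 + V x" by linarith
  then have "exp (V y) \<le> exp (\<kappa>1 + V x)" by simp
  then show ?thesis by (simp add: exp_add)
qed

end


context JSV begin

lemma algA_ineq:
  assumes h: "h \<in> algA \<mu> q" and r: "r > 0"
  shows "(\<integral> x. (h x)\<^sup>2 \<partial>MV) \<le> r * (2 * exp \<kappa>1 * energy \<mu> q MV h + exp \<kappa>1 * (lam * \<kappa>1\<^sup>2) / 2 * (\<integral> x. (h x)\<^sup>2 \<partial>MV))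
          + \<beta> r * (\<integral> x. \<bar>h x\<bar> * exp (V x / 2) \<partial>\<mu>)\<^sup>2"
proof -
  interpret prob_space \<mu> by (rule prob)
  define K where "K = exp \<kappa>1"
  have K0: "0 < K" unfolding K_def by simp
  from algA_D(2)[OF h] obtain Ch where Ch: "\<And>x. \<bar>h x\<bar> \<le> Ch" by blast
  have Ch0: "0 \<le> Ch" using Ch[of undefined] by linarith
  have hsq: "(h x)\<^sup>2 \<le> Ch\<^sup>2" for x using power_mono[OF Ch[of x] abs_ge_zero, of 2] by simp
  have hb: "h \<in> borel_measurable borel" by (rule algA_D(1)[OF h])
  have hm[measurable]: "h \<in> borel_measurable \<mu>" by (rule meas_iff[OF sets_mu, THEN iffD2, OF hb])
  have qx[measurable]: "q x \<in> borel_measurable \<mu>" for x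
    using measurable_Pair2[OF q_meas_pair[OF sets_mu], of x] sets_eq_imp_space_eq[OF sets_mu] by simp
  have dm[measurable]: "(\<lambda>y. dist x y) \<in> borel_measurable \<mu>" for x
    by (rule meas_iff[OF sets_mu, THEN iffD2]) measurable
  define g where "g n x = h x * exp (min (V x) (real n) / 2)" for n x
  have gb: "g n \<in> borel_measurable borel" for n unfolding g_def using hb V_meas by measurable
  have gm[measurable]: "g n \<in> borel_measurable \<mu>" for n by (rule meas_iff[OF sets_mu, THEN iffD2, OF gb])
  have gbd: "\<bar>g n x\<bar> \<le> Ch * exp (real n / 2)" for n x
  proof -
    have "\<bar>g n x\<bar> = \<bar>h x\<bar> * exp (min (V x) (real n) / 2)" unfolding g_def by (simp add: abs_mult)
    also have "\<dots> \<le> Ch * exp (real n / 2)" using Ch[of x] Ch0 by (intro mult_mono) auto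
    finally show ?thesis .
  qed
  have core: "(g n x - g n y)\<^sup>2 \<le> 2 * exp (min (V y) (real n)) * (h x - h y)\<^sup>2 +
      2 * (h x)\<^sup>2 * (exp (min (V x) (real n)) * (K * (\<kappa>1\<^sup>2 / 4 * min 1 ((dist x y)\<^sup>2))))"
    if "q x y > 0" for n x y
    unfolding g_def K_def by (rule pw_core[OF that])
  have gA: "g n \<in> algA \<mu> q" for n
  proof -
    from algA_D(3)[OF h] obtain CF0 where CF0: "\<And>x. (\<integral>\<^sup>+ y. ennreal ((h x - h y)\<^sup>2 * q x y) \<partial>\<mu>) \<le> ennreal CF0" by blast
    from lambda_fin obtain CG0 where CG0: "\<And>x. (\<integral>\<^sup>+ y. ennreal (min 1 ((dist x y)\<^sup>2) * q x y) \<partial>\<mu>) \<le> ennreal CG0" by blast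
    define CF where "CF = max CF0 0"
    define CG where "CG = max CG0 0"
    have CF: "(\<integral>\<^sup>+ y. ennreal ((h x - h y)\<^sup>2 * q x y) \<partial>\<mu>) \<le> ennreal CF" for x
      using CF0[of x] unfolding CF_def by (meson ennreal_leI max.cobounded1 order_trans)
    have CG: "(\<integral>\<^sup>+ y. ennreal (min 1 ((dist x y)\<^sup>2) * q x y) \<partial>\<mu>) \<le> ennreal CG" for x
      using CG0[of x] unfolding CG_def by (meson ennreal_leI max.cobounded1 order_trans)
    define A where "A = 2 * exp (real n)"
    define B where "B = 2 * Ch\<^sup>2 * (exp (real n) * (K * (\<kappa>1\<^sup>2 / 4)))"
    have A0: "0 \<le> A" and B0: "0 \<le> B" unfolding A_def B_def using K0 by auto
    have pw: "(g n x - g n y)\<^sup>2 * q x y \<le> A * ((h x - h y)\<^sup>2 * q x y) + B * (min 1 ((dist x y)\<^sup>2) * q x y)" for x y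
    proof (cases "q x y = 0")
      case True then show ?thesis by simp
    next
      case False
      then have qp: "q x y > 0" using q_nonneg[of x y] by simp
      have m0: "0 \<le> min 1 ((dist x y)\<^sup>2)" by simp
      have "2 * exp (min (V y) (real n)) * (h x - h y)\<^sup>2 \<le> A * (h x - h y)\<^sup>2"
        unfolding A_def by (intro mult_right_mono) auto
      moreover have "2 * (h x)\<^sup>2 * (exp (min (V x) (real n)) * (K * (\<kappa>1\<^sup>2 / 4 * min 1 ((dist x y)\<^sup>2))))
          \<le> 2 * Ch\<^sup>2 * (exp (real n) * (K * (\<kappa>1\<^sup>2 / 4 * min 1 ((dist x y)\<^sup>2))))"
        using hsq[of x] K0 m0 by (intro mult_mono mult_right_mono) auto
      moreover have "2 * Ch\<^sup>2 * (exp (real n) * (K * (\<kappa>1\<^sup>2 / 4 * min 1 ((dist x y)\<^sup>2)))) = B * min 1 ((dist x y)\<^sup>2)"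
        unfolding B_def by (simp add: algebra_simps)
      ultimately have "(g n x - g n y)\<^sup>2 \<le> A * (h x - h y)\<^sup>2 + B * min 1 ((dist x y)\<^sup>2)"
        using core[OF qp, of n] by linarith
      then have "(g n x - g n y)\<^sup>2 * q x y \<le> (A * (h x - h y)\<^sup>2 + B * min 1 ((dist x y)\<^sup>2)) * q x y"
        using q_nonneg[of x y] by (intro mult_right_mono) auto
      then show ?thesis by (simp add: algebra_simps)
    qed
    have "(\<integral>\<^sup>+ y. ennreal ((g n x - g n y)\<^sup>2 * q x y) \<partial>\<mu>) \<le> ennreal (A * CF + B * CG)" for x
    proof -
      have "(\<integral>\<^sup>+ y. ennreal ((g n x - g n y)\<^sup>2 * q x y) \<partial>\<mu>) \<le>
          (\<integral>\<^sup>+ y. ennreal (A * ((h x - h y)\<^sup>2 * q x y) + B * (min 1 ((dist x y)\<^sup>2) * q x y)) \<partial>\<mu>)"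
        by (intro nn_integral_mono ennreal_leI pw)
      also have "\<dots> \<le> ennreal (A * CF + B * CG)"
        by (rule nn_comb[OF _ _ _ _ A0 B0 _ _ CF[of x] CG[of x]]) (auto simp: CF_def CG_def q_nonneg)
      finally show ?thesis .
    qed
    moreover have "\<exists>C. \<forall>x. \<bar>g n x\<bar> \<le> C" using gbd by blast
    ultimately show ?thesis unfolding algA_def using gm by blast
  qed
  have Gb: "Gamma \<mu> q h h \<in> borel_measurable \<mu>" by (rule Gamma_meas[OF sets_mu hb])
  from Gamma_bound[OF h] obtain CGam where CGam: "\<And>x. Gamma \<mu> q h h x \<le> CGam" by blast
  have gam: "Gamma \<mu> q (g n) (g n) x \<le> (2 * K) * (exp (V x) * Gamma \<mu> q h h x) + (K * \<kappa>1\<^sup>2 / 2 * lam) * (exp (V x) * (h x)\<^sup>2)" for n x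
  proof -
    define c1 where "c1 = 2 * K * exp (V x)"
    define c2 where "c2 = K * \<kappa>1\<^sup>2 / 2 * (h x)\<^sup>2 * exp (V x)"
    have c10: "0 \<le> c1" and c20: "0 \<le> c2" unfolding c1_def c2_def using K0 by auto
    have pw2: "(g n x - g n y)\<^sup>2 * q x y \<le> c1 * ((h x - h y)\<^sup>2 * q x y) + c2 * (min 1 ((dist x y)\<^sup>2) * q x y)" for y
    proof (cases "q x y = 0")
      case True then show ?thesis by simp
    next
      case False
      then have qp: "q x y > 0" using q_nonneg[of x y] by simp
      have m0: "0 \<le> min 1 ((dist x y)\<^sup>2)" by simp
      have "exp (min (V y) (real n)) \<le> exp (V y)" by simp
      also have "\<dots> \<le> K * exp (V x)" unfolding K_def by (rule Vy_le[OF qp])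
      finally have "2 * exp (min (V y) (real n)) * (h x - h y)\<^sup>2 \<le> c1 * (h x - h y)\<^sup>2"
        unfolding c1_def by (intro mult_right_mono) auto
      moreover have "2 * (h x)\<^sup>2 * (exp (min (V x) (real n)) * (K * (\<kappa>1\<^sup>2 / 4 * min 1 ((dist x y)\<^sup>2))))
          \<le> 2 * (h x)\<^sup>2 * (exp (V x) * (K * (\<kappa>1\<^sup>2 / 4 * min 1 ((dist x y)\<^sup>2))))"
        using K0 m0 by (intro mult_left_mono mult_right_mono) auto
      moreover have "2 * (h x)\<^sup>2 * (exp (V x) * (K * (\<kappa>1\<^sup>2 / 4 * min 1 ((dist x y)\<^sup>2)))) = c2 * min 1 ((dist x y)\<^sup>2)"
        unfolding c2_def by (simp add: algebra_simps)
      ultimately have "(g n x - g n y)\<^sup>2 \<le> c1 * (h x - h y)\<^sup>2 + c2 * min 1 ((dist x y)\<^sup>2)"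
        using core[OF qp, of n] by linarith
      then have "(g n x - g n y)\<^sup>2 * q x y \<le> (c1 * (h x - h y)\<^sup>2 + c2 * min 1 ((dist x y)\<^sup>2)) * q x y"
        using q_nonneg[of x y] by (intro mult_right_mono) auto
      then show ?thesis by (simp add: algebra_simps)
    qed
    have "Gamma \<mu> q (g n) (g n) x \<le> (\<integral> y. c1 * ((h x - h y)\<^sup>2 * q x y) + c2 * (min 1 ((dist x y)\<^sup>2) * q x y) \<partial>\<mu>)"
      unfolding Gamma_eq using D_int[OF gA, of n x] D_int[OF h, of x] lam_bound(1)[of x]
      by (intro integral_mono pw2) auto
    also have "\<dots> = c1 * Gamma \<mu> q h h x + c2 * (\<integral> y. min 1 ((dist x y)\<^sup>2) * q x y \<partial>\<mu>)"
      unfolding Gamma_eq using D_int[OF h, of x] lam_bound(1)[of x] by simp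
    also have "\<dots> \<le> c1 * Gamma \<mu> q h h x + c2 * lam"
      using lam_bound(2)[of x] c20 by (intro add_left_mono mult_left_mono) auto
    also have "\<dots> = (2 * K) * (exp (V x) * Gamma \<mu> q h h x) + (K * \<kappa>1\<^sup>2 / 2 * lam) * (exp (V x) * (h x)\<^sup>2)"
      unfolding c1_def c2_def by (simp add: algebra_simps)
    finally show ?thesis .
  qed
  have hb2: "(\<lambda>x. (h x)\<^sup>2) \<in> borel_measurable borel" using hb by measurable
  have EV: "energy \<mu> q MV h = (\<integral> x. exp (V x) * Gamma \<mu> q h h x \<partial>\<mu>)"
    unfolding energy_def by (rule int_MV[OF Gamma_meas[OF refl hb]])
  have aV: "(\<integral> x. (h x)\<^sup>2 \<partial>MV) = (\<integral> x. exp (V x) * (h x)\<^sup>2 \<partial>\<mu>)"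
    by (rule int_MV[OF hb2])
  have iG: "integrable \<mu> (\<lambda>x. exp (V x) * Gamma \<mu> q h h x)"
    by (rule int_mult_bdd[OF V_int Gb, of CGam]) (use CGam Gamma_nonneg in \<open>auto simp: abs_of_nonneg\<close>)
  have iH: "integrable \<mu> (\<lambda>x. exp (V x) * (h x)\<^sup>2)"
    by (rule int_mult_bdd[OF V_int _, of _ "Ch\<^sup>2"]) (use hsq in auto)
  have En: "energy \<mu> q \<mu> (g n) \<le> 2 * K * energy \<mu> q MV h + K * (lam * \<kappa>1\<^sup>2) / 2 * (\<integral> x. (h x)\<^sup>2 \<partial>MV)" for n
  proof -
    have "energy \<mu> q \<mu> (g n) \<le> (\<integral> x. (2 * K) * (exp (V x) * Gamma \<mu> q h h x) + (K * \<kappa>1\<^sup>2 / 2 * lam) * (exp (V x) * (h x)\<^sup>2) \<partial>\<mu>)"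
      unfolding energy_def using energy_int[OF sets_mu fin_mu gA[of n]] iG iH
      by (intro integral_mono gam) auto
    also have "\<dots> = (2 * K) * energy \<mu> q MV h + (K * \<kappa>1\<^sup>2 / 2 * lam) * (\<integral> x. (h x)\<^sup>2 \<partial>MV)"
      unfolding EV aV using iG iH by simp
    finally show ?thesis by (simp add: algebra_simps)
  qed
  have sp: "(\<integral> x. (g n x)\<^sup>2 \<partial>\<mu>) \<le> r * energy \<mu> q \<mu> (g n) + \<beta> r * (\<integral> x. \<bar>g n x\<bar> \<partial>\<mu>)\<^sup>2" for n
    using SPI[OF r algA_form_dom[OF gA[of n]]] form_val_algA[OF gA[of n]] by simp
  define m where "m = (\<integral> x. \<bar>h x\<bar> * exp (V x / 2) \<partial>\<mu>)"
  have ehalf: "exp (V x / 2) \<le> 1 + exp (V x)" for x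
  proof -
    have "exp (V x / 2) \<le> 1 + (exp (V x / 2))\<^sup>2"
    proof -
      have "0 \<le> (exp (V x / 2) - 1/2)\<^sup>2 + 3/4" by simp
      then show ?thesis by (simp add: power2_eq_square algebra_simps)
    qed
    then show ?thesis by (simp add: exp_half_sq)
  qed
  have im: "integrable \<mu> (\<lambda>x. \<bar>h x\<bar> * exp (V x / 2))"
  proof (rule Bochner_Integration.integrable_bound[of \<mu> "\<lambda>x. Ch * (1 + exp (V x))"])
    show "integrable \<mu> (\<lambda>x. Ch * (1 + exp (V x)))" using V_int by simp
    show "(\<lambda>x. \<bar>h x\<bar> * exp (V x / 2)) \<in> borel_measurable \<mu>" by measurable
    show "AE x in \<mu>. norm (\<bar>h x\<bar> * exp (V x / 2)) \<le> norm (Ch * (1 + exp (V x)))"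
    proof (rule AE_I2)
      fix x
      have "\<bar>h x\<bar> * exp (V x / 2) \<le> Ch * (1 + exp (V x))"
        using Ch[of x] ehalf[of x] Ch0 by (intro mult_mono) auto
      then show "norm (\<bar>h x\<bar> * exp (V x / 2)) \<le> norm (Ch * (1 + exp (V x)))"
        using Ch0 by (simp add: abs_mult)
    qed
  qed
  have L1: "(\<integral> x. \<bar>g n x\<bar> \<partial>\<mu>)\<^sup>2 \<le> m\<^sup>2" for n
  proof -
    have ig: "integrable \<mu> (\<lambda>x. \<bar>g n x\<bar>)"
      by (rule bdd_int[OF fin_mu, of _ "Ch * exp (real n / 2)"]) (use gbd in auto)
    have "(\<integral> x. \<bar>g n x\<bar> \<partial>\<mu>) \<le> m"
      unfolding m_def using ig im
    proof (intro integral_mono)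
      fix x
      show "\<bar>g n x\<bar> \<le> \<bar>h x\<bar> * exp (V x / 2)"
        unfolding g_def by (simp add: abs_mult mult_left_mono)
    qed auto
    moreover have "0 \<le> (\<integral> x. \<bar>g n x\<bar> \<partial>\<mu>)" by simp
    ultimately show ?thesis by (rule power_mono)
  qed
  have b0: "0 < \<beta> r" by (rule beta_pos[OF r])
  have bound: "(\<integral> x. (g n x)\<^sup>2 \<partial>\<mu>) \<le> r * (2 * K * energy \<mu> q MV h + K * (lam * \<kappa>1\<^sup>2) / 2 * (\<integral> x. (h x)\<^sup>2 \<partial>MV)) + \<beta> r * m\<^sup>2" for n
  proof -
    have "r * energy \<mu> q \<mu> (g n) \<le> r * (2 * K * energy \<mu> q MV h + K * (lam * \<kappa>1\<^sup>2) / 2 * (\<integral> x. (h x)\<^sup>2 \<partial>MV))"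
      using En[of n] r by (intro mult_left_mono) auto
    moreover have "\<beta> r * (\<integral> x. \<bar>g n x\<bar> \<partial>\<mu>)\<^sup>2 \<le> \<beta> r * m\<^sup>2" using L1[of n] b0 by (intro mult_left_mono) auto
    ultimately show ?thesis using sp[of n] by linarith
  qed
  have gsq: "(g n x)\<^sup>2 = exp (min (V x) (real n)) * (h x)\<^sup>2" for n x
    unfolding g_def by (simp add: power_mult_distrib exp_half_sq)
  have lim: "(\<lambda>n. \<integral> x. (g n x)\<^sup>2 \<partial>\<mu>) \<longlonglongrightarrow> (\<integral> x. exp (V x) * (h x)\<^sup>2 \<partial>\<mu>)"
  proof (rule integral_dominated_convergence[where w="\<lambda>x. exp (V x) * (h x)\<^sup>2"])
    show "(\<lambda>x. exp (V x) * (h x)\<^sup>2) \<in> borel_measurable \<mu>" by measurable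
    show "(\<lambda>x. (g n x)\<^sup>2) \<in> borel_measurable \<mu>" for n by measurable
    show "integrable \<mu> (\<lambda>x. exp (V x) * (h x)\<^sup>2)" by (rule iH)
    show "AE x in \<mu>. (\<lambda>n. (g n x)\<^sup>2) \<longlonglongrightarrow> exp (V x) * (h x)\<^sup>2"
    proof (rule AE_I2)
      fix x
      have "eventually (\<lambda>n. (g n x)\<^sup>2 = exp (V x) * (h x)\<^sup>2) sequentially"
        using eventually_ge_at_top[of "nat \<lceil>V x\<rceil>"]
      proof eventually_elim
        case (elim n)
        have "V x \<le> real (nat \<lceil>V x\<rceil>)" by (rule real_nat_ceiling_ge)
        also have "\<dots> \<le> real n" using elim by simp
        finally show ?case unfolding gsq by simp
      qed
      then show "(\<lambda>n. (g n x)\<^sup>2) \<longlonglongrightarrow> exp (V x) * (h x)\<^sup>2" by (rule tendsto_eventually)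
    qed
    show "AE x in \<mu>. norm ((g n x)\<^sup>2) \<le> exp (V x) * (h x)\<^sup>2" for n
      by (rule AE_I2) (simp add: gsq mult_right_mono)
  qed
  have "(\<integral> x. exp (V x) * (h x)\<^sup>2 \<partial>\<mu>) \<le> r * (2 * K * energy \<mu> q MV h + K * (lam * \<kappa>1\<^sup>2) / 2 * (\<integral> x. (h x)\<^sup>2 \<partial>MV)) + \<beta> r * m\<^sup>2"
    by (rule LIMSEQ_le_const2[OF lim]) (use bound in auto)
  then show ?thesis unfolding aV[symmetric] m_def K_def .
qed

end


lemma L2_conv:
  fixes fn :: "nat \<Rightarrow> 'a \<Rightarrow> real" and f :: "'a \<Rightarrow> real"
  assumes N: "prob_space N" and fm: "f \<in> borel_measurable N" and fi: "integrable N (\<lambda>x. (f x)\<^sup>2)"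
    and fnm: "\<And>n. fn n \<in> borel_measurable N" and fni: "\<And>n. integrable N (\<lambda>x. (fn n x)\<^sup>2)"
    and L: "(\<lambda>n. \<integral> x. (fn n x - f x)\<^sup>2 \<partial>N) \<longlonglongrightarrow> 0"
  shows "(\<lambda>n. \<integral> x. (fn n x)\<^sup>2 \<partial>N) \<longlonglongrightarrow> (\<integral> x. (f x)\<^sup>2 \<partial>N)"
    and "(\<lambda>n. \<integral> x. \<bar>fn n x\<bar> \<partial>N) \<longlonglongrightarrow> (\<integral> x. \<bar>f x\<bar> \<partial>N)"
proof -
  interpret prob_space N by (rule N)
  define d where "d n = (\<integral> x. (fn n x - f x)\<^sup>2 \<partial>N)" for n
  define A where "A = (\<integral> x. (f x)\<^sup>2 \<partial>N)"
  have [measurable]: "f \<in> borel_measurable N" "\<And>n. fn n \<in> borel_measurable N" using fm fnm by auto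
  have f1: "integrable N f" by (rule square_integrable_imp_integrable[OF fm fi])
  have fn1: "integrable N (fn n)" for n by (rule square_integrable_imp_integrable[OF fnm fni])
  have di: "integrable N (\<lambda>x. (fn n x - f x)\<^sup>2)" for n
  proof (rule Bochner_Integration.integrable_bound[of N "\<lambda>x. 2 * (fn n x)\<^sup>2 + 2 * (f x)\<^sup>2"])
    show "integrable N (\<lambda>x. 2 * (fn n x)\<^sup>2 + 2 * (f x)\<^sup>2)" using fni fi by simp
    show "AE x in N. norm ((fn n x - f x)\<^sup>2) \<le> norm (2 * (fn n x)\<^sup>2 + 2 * (f x)\<^sup>2)"
    proof (rule AE_I2)
      fix x
      have "0 \<le> (fn n x + f x)\<^sup>2" by simp
      then have "(fn n x - f x)\<^sup>2 \<le> 2 * (fn n x)\<^sup>2 + 2 * (f x)\<^sup>2" by (simp add: power2_eq_square algebra_simps)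
      then show "norm ((fn n x - f x)\<^sup>2) \<le> norm (2 * (fn n x)\<^sup>2 + 2 * (f x)\<^sup>2)" by simp
    qed
  qed auto
  have d0: "0 \<le> d n" for n unfolding d_def by simp
  have A0: "0 \<le> A" unfolding A_def by simp
  have L': "d \<longlonglongrightarrow> 0" using L unfolding d_def[abs_def] .
  have CS1: "(\<integral> x. \<bar>fn n x - f x\<bar> \<partial>N) \<le> sqrt (d n)" for n
  proof -
    have "(\<integral> x. sqrt ((fn n x - f x)\<^sup>2) * sqrt 1 \<partial>N)\<^sup>2 \<le> (\<integral> x. (fn n x - f x)\<^sup>2 \<partial>N) * (\<integral> x. 1 \<partial>N)"
      by (rule CS_real(2)[OF di]) auto
    then have "(\<integral> x. \<bar>fn n x - f x\<bar> \<partial>N)\<^sup>2 \<le> d n" unfolding d_def by (simp add: prob_space)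
    then show ?thesis by (rule real_le_rsqrt)
  qed
  have CS2: "\<bar>\<integral> x. f x * (fn n x - f x) \<partial>N\<bar> \<le> sqrt (A * d n)" and i2: "integrable N (\<lambda>x. f x * (fn n x - f x))" for n
  proof -
    have i: "integrable N (\<lambda>x. sqrt ((f x)\<^sup>2) * sqrt ((fn n x - f x)\<^sup>2))"
      by (rule CS_real(1)[OF fi di]) auto
    have c: "(\<integral> x. sqrt ((f x)\<^sup>2) * sqrt ((fn n x - f x)\<^sup>2) \<partial>N)\<^sup>2 \<le> A * d n"
      unfolding A_def d_def by (rule CS_real(2)[OF fi di]) auto
    show i2: "integrable N (\<lambda>x. f x * (fn n x - f x))"
      by (rule Bochner_Integration.integrable_bound[OF i]) (auto simp: abs_mult)
    have "\<bar>\<integral> x. f x * (fn n x - f x) \<partial>N\<bar> \<le> (\<integral> x. \<bar>f x * (fn n x - f x)\<bar> \<partial>N)"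
      by (rule integral_abs_bound)
    also have "\<dots> = (\<integral> x. sqrt ((f x)\<^sup>2) * sqrt ((fn n x - f x)\<^sup>2) \<partial>N)" by (simp add: abs_mult)
    also have "\<dots> \<le> sqrt (A * d n)" using c by (rule real_le_rsqrt)
    finally show "\<bar>\<integral> x. f x * (fn n x - f x) \<partial>N\<bar> \<le> sqrt (A * d n)" .
  qed
  have sqrt0: "(\<lambda>n. sqrt (d n)) \<longlonglongrightarrow> 0" using tendsto_real_sqrt[OF L'] by simp
  have sqrt1: "(\<lambda>n. d n + 2 * sqrt (A * d n)) \<longlonglongrightarrow> 0"
    using tendsto_add[OF L' tendsto_mult[OF tendsto_const tendsto_real_sqrt[OF tendsto_mult[OF tendsto_const L']]], of 2 A]
    by simp
  have "(\<lambda>n. (\<integral> x. (fn n x)\<^sup>2 \<partial>N) - A) \<longlonglongrightarrow> 0"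
  proof (rule Lim_null_comparison[OF _ sqrt1])
    show "\<forall>\<^sub>F n in sequentially. norm ((\<integral> x. (fn n x)\<^sup>2 \<partial>N) - A) \<le> d n + 2 * sqrt (A * d n)"
    proof (rule always_eventually, rule allI)
      fix n
      have "(\<integral> x. (fn n x)\<^sup>2 \<partial>N) = (\<integral> x. (fn n x - f x)\<^sup>2 + 2 * (f x * (fn n x - f x)) + (f x)\<^sup>2 \<partial>N)"
        by (rule Bochner_Integration.integral_cong) (simp_all add: power2_eq_square algebra_simps)
      also have "\<dots> = d n + 2 * (\<integral> x. f x * (fn n x - f x) \<partial>N) + A"
        unfolding d_def A_def using di[of n] i2[of n] fi by simp
      finally have "(\<integral> x. (fn n x)\<^sup>2 \<partial>N) - A = d n + 2 * (\<integral> x. f x * (fn n x - f x) \<partial>N)" by simp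
      then show "norm ((\<integral> x. (fn n x)\<^sup>2 \<partial>N) - A) \<le> d n + 2 * sqrt (A * d n)"
        using CS2[of n] d0[of n] by simp
    qed
  qed
  then show "(\<lambda>n. \<integral> x. (fn n x)\<^sup>2 \<partial>N) \<longlonglongrightarrow> (\<integral> x. (f x)\<^sup>2 \<partial>N)"
    unfolding A_def by (rule LIM_zero_cancel)
  have "(\<lambda>n. (\<integral> x. \<bar>fn n x\<bar> \<partial>N) - (\<integral> x. \<bar>f x\<bar> \<partial>N)) \<longlonglongrightarrow> 0"
  proof (rule Lim_null_comparison[OF _ sqrt0])
    show "\<forall>\<^sub>F n in sequentially. norm ((\<integral> x. \<bar>fn n x\<bar> \<partial>N) - (\<integral> x. \<bar>f x\<bar> \<partial>N)) \<le> sqrt (d n)"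
    proof (rule always_eventually, rule allI)
      fix n
      have "(\<integral> x. \<bar>fn n x\<bar> \<partial>N) - (\<integral> x. \<bar>f x\<bar> \<partial>N) = (\<integral> x. \<bar>fn n x\<bar> - \<bar>f x\<bar> \<partial>N)"
        using fn1[of n] f1 by simp
      also have "\<bar>\<dots>\<bar> \<le> (\<integral> x. \<bar>\<bar>fn n x\<bar> - \<bar>f x\<bar>\<bar> \<partial>N)" by (rule integral_abs_bound)
      also have "\<dots> \<le> (\<integral> x. \<bar>fn n x - f x\<bar> \<partial>N)"
        using fn1[of n] f1 by (intro integral_mono) auto
      also have "\<dots> \<le> sqrt (d n)" by (rule CS1)
      finally show "norm ((\<integral> x. \<bar>fn n x\<bar> \<partial>N) - (\<integral> x. \<bar>f x\<bar> \<partial>N)) \<le> sqrt (d n)" by simp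
    qed
  qed
  then show "(\<lambda>n. \<integral> x. \<bar>fn n x\<bar> \<partial>N) \<longlonglongrightarrow> (\<integral> x. \<bar>f x\<bar> \<partial>N)" by (rule LIM_zero_cancel)
qed



context JSV begin

lemma sqrt_exp: "sqrt (exp z) = exp (z / 2)"
proof -
  have "sqrt (exp z) = sqrt ((exp (z / 2))\<^sup>2)" by (simp add: exp_half_sq)
  also have "\<dots> = exp (z / 2)" by simp
  finally show ?thesis .
qed

lemma k_facts:
  shows "integrable \<mu> (\<lambda>x. exp (- V x))"
    and "1 \<le> (\<integral> x. exp (- V x) \<partial>\<mu>)"
    and "(\<integral> x. exp (- V x) \<partial>\<mu>)\<^sup>2 \<le> (\<integral> x. exp (- 2 * V x) \<partial>\<mu>)"
proof -
  interpret prob_space \<mu> by (rule prob)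
  have sq: "exp (- 2 * V x) = (exp (- V x))\<^sup>2" for x
    by (simp add: power2_eq_square exp_add[symmetric])
  show ik: "integrable \<mu> (\<lambda>x. exp (- V x))"
  proof (rule Bochner_Integration.integrable_bound[of \<mu> "\<lambda>x. 1 + exp (- 2 * V x)"])
    show "integrable \<mu> (\<lambda>x. 1 + exp (- 2 * V x))" using kappa2_fin by simp
    show "AE x in \<mu>. norm (exp (- V x)) \<le> norm (1 + exp (- 2 * V x))"
    proof (rule AE_I2)
      fix x
      have "0 \<le> (exp (- V x) - 1/2)\<^sup>2 + 3/4" by simp
      then have "exp (- V x) \<le> 1 + (exp (- V x))\<^sup>2" by (simp add: power2_eq_square algebra_simps)
      then show "norm (exp (- V x)) \<le> norm (1 + exp (- 2 * V x))" unfolding sq by simp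
    qed
  qed simp
  have "(\<integral> x. sqrt (exp (V x)) * sqrt (exp (- V x)) \<partial>\<mu>)\<^sup>2 \<le> (\<integral> x. exp (V x) \<partial>\<mu>) * (\<integral> x. exp (- V x) \<partial>\<mu>)"
    by (rule CS_real(2)[OF V_int ik]) auto
  moreover have "sqrt (exp (V x)) * sqrt (exp (- V x)) = 1" for x
    by (simp add: real_sqrt_mult[symmetric] exp_add[symmetric])
  ultimately show "1 \<le> (\<integral> x. exp (- V x) \<partial>\<mu>)" using V_one by (simp add: prob_space)
  have "(\<integral> x. sqrt (exp (- 2 * V x)) * sqrt 1 \<partial>\<mu>)\<^sup>2 \<le> (\<integral> x. exp (- 2 * V x) \<partial>\<mu>) * (\<integral> x. 1 \<partial>\<mu>)"
    by (rule CS_real(2)[OF kappa2_fin]) auto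
  moreover have "sqrt (exp (- 2 * V x)) * sqrt 1 = exp (- V x)" for x
    unfolding sq by simp
  ultimately show "(\<integral> x. exp (- V x) \<partial>\<mu>)\<^sup>2 \<le> (\<integral> x. exp (- 2 * V x) \<partial>\<mu>)" by (simp add: prob_space)
qed

lemma beta_ge1: assumes r: "r > 0" shows "1 \<le> \<beta> r"
proof -
  interpret prob_space \<mu> by (rule prob)
  have "(\<integral> x. ((\<lambda>x. 1::real) x)\<^sup>2 \<partial>\<mu>) \<le> r * form_val \<mu> q \<mu> (\<lambda>x. 1) + \<beta> r * (\<integral> x. \<bar>(\<lambda>x. 1::real) x\<bar> \<partial>\<mu>)\<^sup>2"
    by (rule SPI[OF r algA_form_dom[OF algA_const]])
  then show ?thesis using form_val_algA[OF algA_const, of 1] energy_const[of \<mu> 1] by (simp add: prob_space)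
qed

lemma mp_bounds:
  assumes h: "h \<in> algA \<mu> q"
  shows "(\<integral> x. \<bar>h x\<bar> * exp (V x / 2) \<partial>\<mu>)\<^sup>2 \<le> (\<integral> x. \<bar>h x\<bar> \<partial>MV) * (\<integral> x. \<bar>h x\<bar> \<partial>\<mu>)"
    and "(\<integral> x. \<bar>h x\<bar> \<partial>\<mu>)\<^sup>2 \<le> (\<integral> x. (h x)\<^sup>2 \<partial>MV) * (\<integral> x. exp (- V x) \<partial>\<mu>)"
proof -
  interpret prob_space \<mu> by (rule prob)
  from algA_D(2)[OF h] obtain Ch where Ch: "\<And>x. \<bar>h x\<bar> \<le> Ch" by blast
  have hsq: "\<bar>(h x)\<^sup>2\<bar> \<le> Ch\<^sup>2" for x using power_mono[OF Ch[of x] abs_ge_zero, of 2] by simp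
  have hb: "h \<in> borel_measurable borel" by (rule algA_D(1)[OF h])
  have hm[measurable]: "h \<in> borel_measurable \<mu>" by (rule meas_iff[OF sets_mu, THEN iffD2, OF hb])
  have i1: "integrable \<mu> (\<lambda>x. exp (V x) * \<bar>h x\<bar>)"
    by (rule int_mult_bdd[OF V_int _, of _ Ch]) (use Ch in auto)
  have i2: "integrable \<mu> (\<lambda>x. \<bar>h x\<bar>)"
    by (rule bdd_int[OF fin_mu, of _ Ch]) (use Ch in auto)
  have i3: "integrable \<mu> (\<lambda>x. exp (V x) * (h x)\<^sup>2)"
    by (rule int_mult_bdd[OF V_int _, of _ "Ch\<^sup>2"]) (use hsq in auto)
  have bV: "(\<integral> x. \<bar>h x\<bar> \<partial>MV) = (\<integral> x. exp (V x) * \<bar>h x\<bar> \<partial>\<mu>)"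
    by (rule int_MV) (use hb in measurable)
  have aV: "(\<integral> x. (h x)\<^sup>2 \<partial>MV) = (\<integral> x. exp (V x) * (h x)\<^sup>2 \<partial>\<mu>)"
    by (rule int_MV) (use hb in measurable)
  have e1: "sqrt (exp (V x) * \<bar>h x\<bar>) * sqrt \<bar>h x\<bar> = \<bar>h x\<bar> * exp (V x / 2)" for x
  proof -
    have "sqrt (exp (V x) * \<bar>h x\<bar>) * sqrt \<bar>h x\<bar> = sqrt (exp (V x)) * (sqrt \<bar>h x\<bar> * sqrt \<bar>h x\<bar>)"
      by (simp add: real_sqrt_mult)
    also have "\<dots> = exp (V x / 2) * \<bar>h x\<bar>" by (simp add: sqrt_exp)
    finally show ?thesis by simp
  qed
  have "(\<integral> x. sqrt (exp (V x) * \<bar>h x\<bar>) * sqrt \<bar>h x\<bar> \<partial>\<mu>)\<^sup>2 \<le> (\<integral> x. exp (V x) * \<bar>h x\<bar> \<partial>\<mu>) * (\<integral> x. \<bar>h x\<bar> \<partial>\<mu>)"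
    by (rule CS_real(2)[OF i1 i2]) auto
  then show "(\<integral> x. \<bar>h x\<bar> * exp (V x / 2) \<partial>\<mu>)\<^sup>2 \<le> (\<integral> x. \<bar>h x\<bar> \<partial>MV) * (\<integral> x. \<bar>h x\<bar> \<partial>\<mu>)"
    unfolding e1 bV .
  have e2: "sqrt (exp (V x) * (h x)\<^sup>2) * sqrt (exp (- V x)) = \<bar>h x\<bar>" for x
  proof -
    have "sqrt (exp (V x) * (h x)\<^sup>2) * sqrt (exp (- V x)) = sqrt ((exp (V x) * exp (- V x)) * (h x)\<^sup>2)"
      by (simp add: real_sqrt_mult)
    also have "exp (V x) * exp (- V x) = 1" by (simp add: exp_add[symmetric])
    finally show ?thesis by simp
  qed
  have "(\<integral> x. sqrt (exp (V x) * (h x)\<^sup>2) * sqrt (exp (- V x)) \<partial>\<mu>)\<^sup>2 \<le> (\<integral> x. exp (V x) * (h x)\<^sup>2 \<partial>\<mu>) * (\<integral> x. exp (- V x) \<partial>\<mu>)"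
    by (rule CS_real(2)[OF i3 k_facts(1)]) auto
  then show "(\<integral> x. \<bar>h x\<bar> \<partial>\<mu>)\<^sup>2 \<le> (\<integral> x. (h x)\<^sup>2 \<partial>MV) * (\<integral> x. exp (- V x) \<partial>\<mu>)"
    unfolding e2 aV .
qed

lemma algA_final:
  assumes h: "h \<in> algA \<mu> q" and s': "0 < s'" "s' \<le> s" and r: "0 < r"
    and rs: "r \<le> s' * exp (- \<kappa>1) / (4 + jump_lambda \<mu> q * \<kappa>1\<^sup>2 * s')"
  shows "(\<integral> x. (h x)\<^sup>2 \<partial>MV) \<le> s * energy \<mu> q MV h
     + 16 * (\<integral> x. exp (- 2 * V x) \<partial>\<mu>) * (\<beta> r)^3 * (4 + jump_lambda \<mu> q * \<kappa>1\<^sup>2 * s') * (\<integral> x. \<bar>h x\<bar> \<partial>MV)\<^sup>2"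
proof -
  interpret prob_space \<mu> by (rule prob)
  interpret V: prob_space MV by (rule prob_MV)
  have rs': "r \<le> s' * (1 / exp \<kappa>1) / (4 + (lam * \<kappa>1\<^sup>2) * s')"
    using rs unfolding lam_def by (simp add: exp_minus_inverse exp_minus field_simps)
  show ?thesis unfolding lam_def[symmetric]
  proof (rule final_alg[OF _ _ _ _ _ r _ s' rs' algA_ineq[OF h r] mp_bounds(1)[OF h] mp_bounds(2)[OF h]
        k_facts(2) k_facts(3) beta_ge1[OF r]])
    show "0 \<le> (\<integral> x. (h x)\<^sup>2 \<partial>MV)" by simp
    show "0 \<le> (\<integral> x. \<bar>h x\<bar> \<partial>MV)" by simp
    show "0 \<le> energy \<mu> q MV h" by (rule energy_nonneg)
    show "0 \<le> (\<integral> x. \<bar>h x\<bar> \<partial>\<mu>)" by simp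
    show "0 \<le> lam * \<kappa>1\<^sup>2" using lam_bound(3) by simp
    show "0 < exp \<kappa>1" by simp
  qed
qed

end


context JSV begin

lemma dom_final:
  assumes s: "s > 0" and f: "f \<in> form_dom \<mu> q MV"
  shows "(\<integral> x. (f x)\<^sup>2 \<partial>MV) \<le> s * form_val \<mu> q MV f
      + (Inf {16 * (\<integral> x. exp (- 2 * V x) \<partial>\<mu>) * (\<beta> r)^3
                          * (4 + jump_lambda \<mu> q * \<kappa>1\<^sup>2 * s') | s' r.
                        0 < s' \<and> s' \<le> s \<and> 0 < r \<and>
                        r \<le> s' * exp (- \<kappa>1) / (4 + jump_lambda \<mu> q * \<kappa>1\<^sup>2 * s')})
        * (\<integral> x. \<bar>f x\<bar> \<partial>MV)\<^sup>2"
    (is "?A \<le> s * ?fv + Inf ?S * ?b\<^sup>2")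
proof -
  interpret V: prob_space MV by (rule prob_MV)
  from f have fm: "f \<in> borel_measurable MV" and fi: "integrable MV (\<lambda>x. (f x)\<^sup>2)"
    and "\<exists>fn. approx_seq \<mu> q MV fn f" unfolding form_dom_def by auto
  then obtain fn0 where ap0: "approx_seq \<mu> q MV fn0 f" by blast
  have "\<exists>e. (\<lambda>n. energy \<mu> q MV (fn0 n)) \<longlonglongrightarrow> e"
    by (rule energy_cauchy_conv[OF sets_MV fin_MV]) (use ap0 in \<open>auto simp: approx_seq_def\<close>)
  then have ex: "\<exists>e fn. approx_seq \<mu> q MV fn f \<and> (\<lambda>n. energy \<mu> q MV (fn n)) \<longlonglongrightarrow> e"
    using ap0 by blast
  have "\<exists>fn. approx_seq \<mu> q MV fn f \<and> (\<lambda>n. energy \<mu> q MV (fn n)) \<longlonglongrightarrow> form_val \<mu> q MV f"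
    unfolding form_val_def by (rule someI_ex) (use ex in blast)
  then obtain fn where ap: "approx_seq \<mu> q MV fn f" and Elim: "(\<lambda>n. energy \<mu> q MV (fn n)) \<longlonglongrightarrow> ?fv" by blast
  from ap have fA: "\<And>n. fn n \<in> algA \<mu> q" and L2: "(\<lambda>n. \<integral> x. (fn n x - f x)\<^sup>2 \<partial>MV) \<longlonglongrightarrow> 0"
    unfolding approx_seq_def by auto
  have fnm: "fn n \<in> borel_measurable MV" for n
    by (rule meas_iff[OF sets_MV, THEN iffD2, OF algA_D(1)[OF fA]])
  have fni: "integrable MV (\<lambda>x. (fn n x)\<^sup>2)" for n by (rule algA_sq_int[OF fin_MV sets_MV fA])
  note conv = L2_conv[OF prob_MV fm fi fnm fni L2]
  have allB: "?A \<le> s * ?fv + B * ?b\<^sup>2" if B: "B \<in> ?S" for B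
  proof -
    from B obtain s' r where B: "B = 16 * (\<integral> x. exp (- 2 * V x) \<partial>\<mu>) * (\<beta> r)^3 * (4 + jump_lambda \<mu> q * \<kappa>1\<^sup>2 * s')"
      and c: "0 < s'" "s' \<le> s" "0 < r" "r \<le> s' * exp (- \<kappa>1) / (4 + jump_lambda \<mu> q * \<kappa>1\<^sup>2 * s')" by blast
    show ?thesis
    proof (rule LIMSEQ_le[OF conv(1)])
      show "(\<lambda>n. s * energy \<mu> q MV (fn n) + B * (\<integral> x. \<bar>fn n x\<bar> \<partial>MV)\<^sup>2) \<longlonglongrightarrow> s * ?fv + B * ?b\<^sup>2"
        by (intro tendsto_intros Elim conv(2))
      show "\<exists>N. \<forall>n\<ge>N. (\<integral> x. (fn n x)\<^sup>2 \<partial>MV) \<le> s * energy \<mu> q MV (fn n) + B * (\<integral> x. \<bar>fn n x\<bar> \<partial>MV)\<^sup>2"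
        using algA_final[OF fA c] unfolding B by auto
    qed
  qed
  have lam0: "0 \<le> jump_lambda \<mu> q" using lam_bound(3) unfolding lam_def .
  define r0 where "r0 = s * exp (- \<kappa>1) / (4 + jump_lambda \<mu> q * \<kappa>1\<^sup>2 * s)"
  have D: "0 < 4 + jump_lambda \<mu> q * \<kappa>1\<^sup>2 * s" using lam0 s by (simp add: add_pos_nonneg)
  have r0: "0 < r0" unfolding r0_def using s D by simp
  have B0: "16 * (\<integral> x. exp (- 2 * V x) \<partial>\<mu>) * (\<beta> r0)^3 * (4 + jump_lambda \<mu> q * \<kappa>1\<^sup>2 * s) \<in> ?S"
    unfolding mem_Collect_eq
    by (rule exI[of _ s], rule exI[of _ r0]) (use s r0 in \<open>simp add: r0_def\<close>)
  then have Sne: "?S \<noteq> {}" by blast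
  show ?thesis
  proof (cases "?b\<^sup>2 = 0")
    case True
    then show ?thesis using allB[OF B0] by simp
  next
    case False
    then have bp: "0 < ?b\<^sup>2" by (simp add: less_le)
    have "(?A - s * ?fv) / ?b\<^sup>2 \<le> Inf ?S"
    proof (rule cInf_greatest[OF Sne])
      fix B assume "B \<in> ?S"
      from allB[OF this] have "?A - s * ?fv \<le> B * ?b\<^sup>2" by simp
      then show "(?A - s * ?fv) / ?b\<^sup>2 \<le> B" using bp by (simp add: pos_divide_le_eq)
    qed
    then have "?A - s * ?fv \<le> Inf ?S * ?b\<^sup>2" using bp by (simp add: pos_divide_le_eq)
    then show ?thesis by simp
  qed
qed

end

theorem theorem2p9:
  fixes \<mu> :: "'a::polish_space measure"
    and q :: "'a \<Rightarrow> 'a \<Rightarrow> real"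
    and x0 :: 'a
    and V :: "'a \<Rightarrow> real"
    and \<beta> :: "real \<Rightarrow> real"
    and \<kappa>1 :: real
  assumes sets_mu: "sets \<mu> = sets borel"
    and prob: "prob_space \<mu>"
    and q_meas: "(\<lambda>(x, y). q x y) \<in> borel_measurable (borel \<Otimes>\<^sub>M borel)"
    and q_nonneg: "\<And>x y. q x y \<ge> 0"
    and q_diag: "\<And>x. q x x = 0"
    and lambda_fin: "\<exists>C::real. \<forall>x. (\<integral>\<^sup>+ y. ennreal (min 1 ((dist x y)\<^sup>2) * q x y) \<partial>\<mu>) \<le> ennreal C"
    and A_dense: "\<And>f \<epsilon>. f \<in> borel_measurable \<mu> \<Longrightarrow> integrable \<mu> (\<lambda>x. (f x)\<^sup>2) \<Longrightarrow> \<epsilon> > 0 \<Longrightarrow>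
                     \<exists>g\<in>algA \<mu> q. (\<integral> x. (f x - g x)\<^sup>2 \<partial>\<mu>) < \<epsilon>"
    and V_meas: "V \<in> borel_measurable borel"
    and V_loc_bdd: "\<And>r. r > 0 \<Longrightarrow> \<exists>C. \<forall>x. dist x0 x \<le> r \<longrightarrow> \<bar>V x\<bar> \<le> C"
    and V_norm: "integrable \<mu> (\<lambda>x. exp (V x))" "(\<integral> x. exp (V x) \<partial>\<mu>) = 1"
    and beta_pos: "\<And>r. r > 0 \<Longrightarrow> \<beta> r > 0"
    and beta_decr: "\<And>r r'. 0 < r \<Longrightarrow> r \<le> r' \<Longrightarrow> \<beta> r' \<le> \<beta> r"
    and SPI: "\<And>r f. r > 0 \<Longrightarrow> f \<in> form_dom \<mu> q \<mu> \<Longrightarrow>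
               (\<integral> x. (f x)\<^sup>2 \<partial>\<mu>) \<le> r * form_val \<mu> q \<mu> f + \<beta> r * (\<integral> x. \<bar>f x\<bar> \<partial>\<mu>)\<^sup>2"
    and kappa1_pos: "\<kappa>1 > 0"
    and kappa2_fin: "integrable \<mu> (\<lambda>x. exp (- 2 * V x))"
    and V_lip: "\<And>x y. q x y > 0 \<Longrightarrow> \<bar>V x - V y\<bar> \<le> \<kappa>1 * min 1 (dist x y)"
  shows "\<forall>s>0. \<forall>f\<in>form_dom \<mu> q (density \<mu> (\<lambda>x. ennreal (exp (V x)))).
           (\<integral> x. (f x)\<^sup>2 \<partial>density \<mu> (\<lambda>x. ennreal (exp (V x))))
             \<le> s * form_val \<mu> q (density \<mu> (\<lambda>x. ennreal (exp (V x)))) f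
               + (Inf {16 * (\<integral> x. exp (- 2 * V x) \<partial>\<mu>) * (\<beta> r)^3
                          * (4 + jump_lambda \<mu> q * \<kappa>1\<^sup>2 * s') | s' r.
                        0 < s' \<and> s' \<le> s \<and> 0 < r \<and>
                        r \<le> s' * exp (- \<kappa>1) / (4 + jump_lambda \<mu> q * \<kappa>1\<^sup>2 * s')})
                 * (\<integral> x. \<bar>f x\<bar> \<partial>density \<mu> (\<lambda>x. ennreal (exp (V x))))\<^sup>2"
  proof -
  interpret JSV \<mu> q V \<beta> \<kappa>1
    by (intro JSV.intro JS.intro JSV_axioms.intro) (fact assms)+
  show ?thesis
  proof (intro allI impI ballI)
    fix s :: real and f assume "0 < s" "f \<in> form_dom \<mu> q MV"
    then show "(\<integral> x. (f x)\<^sup>2 \<partial>MV)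
             \<le> s * form_val \<mu> q MV f
               + (Inf {16 * (\<integral> x. exp (- 2 * V x) \<partial>\<mu>) * (\<beta> r)^3
                          * (4 + jump_lambda \<mu> q * \<kappa>1\<^sup>2 * s') | s' r.
                        0 < s' \<and> s' \<le> s \<and> 0 < r \<and>
                        r \<le> s' * exp (- \<kappa>1) / (4 + jump_lambda \<mu> q * \<kappa>1\<^sup>2 * s')})
                 * (\<integral> x. \<bar>f x\<bar> \<partial>MV)\<^sup>2"
      by (rule dom_final)
  qed
qed



end
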